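(* Let $\mathcal{A}$ be either $C([0,1])$ or $L^{\infty}((0,1))$, and let $S$ be the unilateral shift on $H_{\mathcal{A}}$, i.e. the operator with $Se_k=e_{k+1}$ for all $k\in\mathbb{N}$ (equivalently $S(x_1,x_2,\dots)=(0,x_1,x_2,\dots)$). Then $$\sigma^{\mathcal{A}}(S)=\{\alpha\in\mathcal{A}\mid \inf|\alpha|\le 1\},$$ and $\sigma_p^{\mathcal{A}}(S)=\varnothing$ in both cases.
   Context: $\mathcal{A}$ is a unital $C^*$-algebra and $H_{\mathcal{A}}=l_2(\mathcal{A})$ is the standard Hilbert $C^*$-module: sequences $x=(x_1,x_2,\dots)$ in $\mathcal{A}$ with $\sum_k x_k^*x_k$ norm-convergent, with $\mathcal{A}$-valued inner product $\langle x,y\rangle=\sum_k x_k^*y_k$ and right $\mathcal{A}$-action coordinatewise. $\{e_k\}_{k\in\mathbb{N}}$ is the standard orthonormal basis ($e_k$ has $1_{\mathcal{A}}$ in the $k$-th coordinate and $0$ elsewhere). $B^a(H_{\mathcal{A}})$ is the $C^*$-algebra of bounded adjointable $\mathcal{A}$-linear operators on $H_{\mathcal{A}}$. For $\alpha\in\mathcal{A}$, $\alpha I$ is the operator $(x_1,x_2,\dots)\mapsto(\alpha x_1,\alpha x_2,\dots)$, which lies in $B^a(H_{\mathcal{A}})$. For $F\in B^a(H_{\mathcal{A}})$: $\sigma^{\mathcal{A}}(F)=\{\alpha\in\mathcal{A}\mid F-\alpha I$ is not invertible in $B^a(H_{\mathcal{A}})\}$ and $\sigma_p^{\mathcal{A}}(F)=\{\alpha\in\mathcal{A}\mid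 \ker(F-\alpha I)\neq\{0\}\}$. For $\alpha\in C([0,1])$, $\inf|\alpha|$ is the usual infimum of $|\alpha|$; for $\alpha\in L^\infty((0,1))$, $\inf|\alpha|$ denotes the essential infimum $\inf\{C>0\mid \mu(|\alpha|^{-1}[0,C])>0\}=\sup\{K>0\mid |\alpha|>K \text{ a.e. on }(0,1)\}$, $\mu$ being Lebesgue measure. *)

theory Defs
  imports "HOL-Analysis.Analysis"
begin

record 'a calg =
  c_add  :: "'a \<Rightarrow> 'a \<Rightarrow> 'a"
  c_mul  :: "'a \<Rightarrow> 'a \<Rightarrow> 'a"
  c_neg  :: "'a \<Rightarrow> 'a"
  c_star :: "'a \<Rightarrow> 'a"
  c_norm :: "'a \<Rightarrow> real"
  c_zero :: "'a"
  c_one  :: "'a"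

primrec psum :: "'a calg \<Rightarrow> (nat \<Rightarrow> 'a) \<Rightarrow> nat \<Rightarrow> 'a" where
  "psum A f 0 = c_zero A"
| "psum A f (Suc n) = c_add A (psum A f n) (f n)"

definition conv_to :: "'a calg \<Rightarrow> (nat \<Rightarrow> 'a) \<Rightarrow> 'a \<Rightarrow> bool" where
  "conv_to A f s \<longleftrightarrow> (\<lambda>n. c_norm A (c_add A (psum A f n) (c_neg A s))) \<longlonglongrightarrow> 0"

definition HA :: "'a calg \<Rightarrow> (nat \<Rightarrow> 'a) set" where
  "HA A = {x. \<exists>s. conv_to A (\<lambda>k. c_mul A (c_star A (x k)) (x k)) s}"

definition inner_A :: "'a calg \<Rightarrow> (nat \<Rightarrow> 'a) \<Rightarrow> (nat \<Rightarrow> 'a) \<Rightarrow> 'a" where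
  "inner_A A x y = (THE s. conv_to A (\<lambda>k. c_mul A (c_star A (x k)) (y k)) s)"

definition hnorm :: "'a calg \<Rightarrow> (nat \<Rightarrow> 'a) \<Rightarrow> real" where
  "hnorm A x = sqrt (c_norm A (inner_A A x x))"

definition vadd :: "'a calg \<Rightarrow> (nat \<Rightarrow> 'a) \<Rightarrow> (nat \<Rightarrow> 'a) \<Rightarrow> (nat \<Rightarrow> 'a)" where
  "vadd A x y = (\<lambda>k. c_add A (x k) (y k))"

definition ract :: "'a calg \<Rightarrow> (nat \<Rightarrow> 'a) \<Rightarrow> 'a \<Rightarrow> (nat \<Rightarrow> 'a)" where
  "ract A x a = (\<lambda>k. c_mul A (x k) a)"

definition vzero :: "'a calg \<Rightarrow> (nat \<Rightarrow> 'a)" where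
  "vzero A = (\<lambda>k. c_zero A)"

text \<open>Bounded adjointable A-linear operators on H_A (operators are considered on H_A only).\<close>
definition Ba :: "'a calg \<Rightarrow> ((nat \<Rightarrow> 'a) \<Rightarrow> (nat \<Rightarrow> 'a)) set" where
  "Ba A = {F. (\<forall>x\<in>HA A. F x \<in> HA A)
     \<and> (\<forall>x\<in>HA A. \<forall>y\<in>HA A. F (vadd A x y) = vadd A (F x) (F y))
     \<and> (\<forall>x\<in>HA A. \<forall>a. F (ract A x a) = ract A (F x) a)
     \<and> (\<exists>C. \<forall>x\<in>HA A. hnorm A (F x) \<le> C * hnorm A x)
     \<and> (\<exists>G. (\<forall>y\<in>HA A. G y \<in> HA A)
            \<and> (\<forall>x\<in>HA A. \<forall>y\<in>HA A. inner_A A (F x) y = inner_A A x (G y)))}"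

definition invertible_Ba :: "'a calg \<Rightarrow> ((nat \<Rightarrow> 'a) \<Rightarrow> (nat \<Rightarrow> 'a)) \<Rightarrow> bool" where
  "invertible_Ba A F \<longleftrightarrow> (\<exists>G\<in>Ba A. \<forall>x\<in>HA A. G (F x) = x \<and> F (G x) = x)"

definition minus_scalar :: "'a calg \<Rightarrow> ((nat \<Rightarrow> 'a) \<Rightarrow> (nat \<Rightarrow> 'a)) \<Rightarrow> 'a \<Rightarrow> ((nat \<Rightarrow> 'a) \<Rightarrow> (nat \<Rightarrow> 'a))" where
  "minus_scalar A F \<alpha> = (\<lambda>x k. c_add A (F x k) (c_neg A (c_mul A \<alpha> (x k))))"

definition A_spectrum :: "'a calg \<Rightarrow> ((nat \<Rightarrow> 'a) \<Rightarrow> (nat \<Rightarrow> 'a)) \<Rightarrow> 'a set" where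
  "A_spectrum A F = {\<alpha>. \<not> invertible_Ba A (minus_scalar A F \<alpha>)}"

definition A_point_spectrum :: "'a calg \<Rightarrow> ((nat \<Rightarrow> 'a) \<Rightarrow> (nat \<Rightarrow> 'a)) \<Rightarrow> 'a set" where
  "A_point_spectrum A F = {\<alpha>. \<exists>x\<in>HA A. x \<noteq> vzero A \<and> minus_scalar A F \<alpha> x = vzero A}"

text \<open>Unilateral shift: S(x_1,x_2,...) = (0,x_1,x_2,...) (indices start at 0 here).\<close>
definition shift :: "'a calg \<Rightarrow> (nat \<Rightarrow> 'a) \<Rightarrow> (nat \<Rightarrow> 'a)" where
  "shift A x = (\<lambda>k. if k = 0 then c_zero A else x (k - 1))"

section \<open>A = C([0,1]) (complex-valued), functions normalised to 0 outside [0,1]\<close>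

typedef C01 = "{f :: real \<Rightarrow> complex. continuous_on {0..1} f \<and> (\<forall>t. t \<notin> {0..1} \<longrightarrow> f t = 0)}"
  by (rule exI[of _ "\<lambda>_. 0"]) auto

definition C01_alg :: "C01 calg" where
  "C01_alg = \<lparr> c_add = (\<lambda>a b. Abs_C01 (\<lambda>t. Rep_C01 a t + Rep_C01 b t)),
               c_mul = (\<lambda>a b. Abs_C01 (\<lambda>t. Rep_C01 a t * Rep_C01 b t)),
               c_neg = (\<lambda>a. Abs_C01 (\<lambda>t. - Rep_C01 a t)),
               c_star = (\<lambda>a. Abs_C01 (\<lambda>t. cnj (Rep_C01 a t))),
               c_norm = (\<lambda>a. Sup ((\<lambda>t. cmod (Rep_C01 a t)) ` {0..1})),
               c_zero = Abs_C01 (\<lambda>t. 0),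
               c_one = Abs_C01 (\<lambda>t. if t \<in> {0..1} then 1 else 0) \<rparr>"

definition inf_abs_C01 :: "C01 \<Rightarrow> real" where
  "inf_abs_C01 a = Inf ((\<lambda>t. cmod (Rep_C01 a t)) ` {0..1})"

section \<open>A = L^infinity((0,1)) (complex-valued), classes modulo a.e. equality\<close>

definition Linf_set :: "(real \<Rightarrow> complex) set" where
  "Linf_set = {f. set_borel_measurable lborel {0<..<1} f
                  \<and> (\<exists>C. AE t in lborel. t \<in> {0<..<1} \<longrightarrow> cmod (f t) \<le> C)}"

definition Linf_rel :: "(real \<Rightarrow> complex) \<Rightarrow> (real \<Rightarrow> complex) \<Rightarrow> bool" where
  "Linf_rel f g \<longleftrightarrow> f \<in> Linf_set \<and> g \<in> Linf_set
                     \<and> (AE t in lborel. t \<in> {0<..<1} \<longrightarrow> f t = g t)"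

lemma Linf_rel_part_equivp: "part_equivp Linf_rel"
proof (rule part_equivpI)
  show "\<exists>x. Linf_rel x x"
    by (rule exI[of _ "\<lambda>_. 0"]) (auto simp: Linf_rel_def Linf_set_def set_borel_measurable_def)
  show "symp Linf_rel"
    by (auto simp: symp_def Linf_rel_def elim: AE_mp)
  show "transp Linf_rel"
    unfolding transp_def Linf_rel_def
    by (auto elim!: AE_mp[OF AE_conjI, rotated])
qed

quotient_type Linf = "real \<Rightarrow> complex" / partial: Linf_rel
  by (rule Linf_rel_part_equivp)

definition Linf_alg :: "Linf calg" where
  "Linf_alg = \<lparr> c_add = (\<lambda>a b. abs_Linf (\<lambda>t. rep_Linf a t + rep_Linf b t)),
               c_mul = (\<lambda>a b. abs_Linf (\<lambda>t. rep_Linf a t * rep_Linf b t)),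
               c_neg = (\<lambda>a. abs_Linf (\<lambda>t. - rep_Linf a t)),
               c_star = (\<lambda>a. abs_Linf (\<lambda>t. cnj (rep_Linf a t))),
               c_norm = (\<lambda>a. Inf {C. 0 \<le> C \<and> (AE t in lborel. t \<in> {0<..<1} \<longrightarrow> cmod (rep_Linf a t) \<le> C)}),
               c_zero = abs_Linf (\<lambda>t. 0),
               c_one = abs_Linf (\<lambda>t. 1) \<rparr>"

definition essinf_abs_Linf :: "Linf \<Rightarrow> real" where
  "essinf_abs_Linf a = Inf {C. 0 < C \<and> emeasure lborel {t \<in> {0<..<1}. cmod (rep_Linf a t) \<le> C} > 0}"

end

theory Submission
  imports Defs
begin


locale falg =
  fixes A :: "'a calg" and F :: "real filter" and ev :: "'a \<Rightarrow> real \<Rightarrow> complex"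
  assumes cnt: "\<And>P. (\<And>n::nat. eventually (P n) F) \<Longrightarrow> eventually (\<lambda>t. \<forall>n. P n t) F"
    and ev_eq: "\<And>a b. eventually (\<lambda>t. ev a t = ev b t) F \<Longrightarrow> a = b"
    and ev_add: "\<And>a b. eventually (\<lambda>t. ev (c_add A a b) t = ev a t + ev b t) F"
    and ev_mul: "\<And>a b. eventually (\<lambda>t. ev (c_mul A a b) t = ev a t * ev b t) F"
    and ev_neg: "\<And>a. eventually (\<lambda>t. ev (c_neg A a) t = - ev a t) F"
    and ev_star: "\<And>a. eventually (\<lambda>t. ev (c_star A a) t = cnj (ev a t)) F"
    and ev_zero: "eventually (\<lambda>t. ev (c_zero A) t = 0) F"
    and ev_one: "eventually (\<lambda>t. ev (c_one A) t = 1) F"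
    and norm_def: "\<And>a. c_norm A a = Inf {C. 0 \<le> C \<and> eventually (\<lambda>t. cmod (ev a t) \<le> C) F}"
    and bdd: "\<And>a. \<exists>C. eventually (\<lambda>t. cmod (ev a t) \<le> C) F"
    and complete: "\<And>(a::nat \<Rightarrow> 'a) g. (\<And>e. e > 0 \<Longrightarrow> \<exists>N. \<forall>n\<ge>N. eventually (\<lambda>t. cmod (ev (a n) t - g t) \<le> e) F)
         \<Longrightarrow> \<exists>s. eventually (\<lambda>t. ev s t = g t) F"
begin

definition rep :: "(real \<Rightarrow> complex) \<Rightarrow> bool" where
  "rep f \<longleftrightarrow> (\<exists>a. eventually (\<lambda>t. ev a t = f t) F)"

lemma cnt2: "(\<And>(m::nat) (n::nat). eventually (P m n) F) \<Longrightarrow> eventually (\<lambda>t. \<forall>m n. P m n t) F"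
proof -
  assume a: "\<And>m n. eventually (P m n) F"
  have "\<And>m. eventually (\<lambda>t. \<forall>n. P m n t) F" by (rule cnt) (rule a)
  thus ?thesis using cnt[of "\<lambda>m t. \<forall>n. P m n t"] by blast
qed

lemma ev2: "eventually P F \<Longrightarrow> eventually Q F \<Longrightarrow> (\<And>t. P t \<Longrightarrow> Q t \<Longrightarrow> R t) \<Longrightarrow> eventually R F"
  using eventually_elim2 by blast
lemma ev3: assumes "eventually P F" "eventually Q F" "eventually S F" "\<And>t. P t \<Longrightarrow> Q t \<Longrightarrow> S t \<Longrightarrow> R t" shows "eventually R F"
proof -
  have "eventually (\<lambda>t. P t \<and> Q t \<and> S t) F" using assms(1-3) by (intro eventually_conj)
  then show ?thesis by (rule eventually_mono) (use assms(4) in blast)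
qed
lemma ev4: assumes "eventually P F" "eventually Q F" "eventually S F" "eventually U F" "\<And>t. P t \<Longrightarrow> Q t \<Longrightarrow> S t \<Longrightarrow> U t \<Longrightarrow> R t" shows "eventually R F"
proof -
  have "eventually (\<lambda>t. P t \<and> Q t \<and> S t \<and> U t) F" using assms(1-4) by (intro eventually_conj)
  then show ?thesis by (rule eventually_mono) (use assms(5) in blast)
qed

lemma rep_ev: "rep (ev a)" unfolding rep_def by (rule exI[of _ a]) simp

lemma rep_cong: "rep f \<Longrightarrow> eventually (\<lambda>t. f t = g t) F \<Longrightarrow> rep g"
  unfolding rep_def by (metis (mono_tags, lifting) ev2)

lemma rep_add: "rep f \<Longrightarrow> rep g \<Longrightarrow> rep (\<lambda>t. f t + g t)"
  unfolding rep_def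
proof (elim exE)
  fix a b assume a: "eventually (\<lambda>t. ev a t = f t) F" and b: "eventually (\<lambda>t. ev b t = g t) F"
  show "\<exists>c. eventually (\<lambda>t. ev c t = f t + g t) F"
    by (rule exI[of _ "c_add A a b"], rule ev3[OF a b ev_add[of a b]]) simp
qed

lemma rep_mul: "rep f \<Longrightarrow> rep g \<Longrightarrow> rep (\<lambda>t. f t * g t)"
  unfolding rep_def
proof (elim exE)
  fix a b assume a: "eventually (\<lambda>t. ev a t = f t) F" and b: "eventually (\<lambda>t. ev b t = g t) F"
  show "\<exists>c. eventually (\<lambda>t. ev c t = f t * g t) F"
    by (rule exI[of _ "c_mul A a b"], rule ev3[OF a b ev_mul[of a b]]) simp
qed

lemma rep_neg: "rep f \<Longrightarrow> rep (\<lambda>t. - f t)"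
  unfolding rep_def
proof (elim exE)
  fix a assume a: "eventually (\<lambda>t. ev a t = f t) F"
  show "\<exists>c. eventually (\<lambda>t. ev c t = - f t) F"
    by (rule exI[of _ "c_neg A a"], rule ev2[OF a ev_neg[of a]]) simp
qed

lemma rep_cnj: "rep f \<Longrightarrow> rep (\<lambda>t. cnj (f t))"
  unfolding rep_def
proof (elim exE)
  fix a assume a: "eventually (\<lambda>t. ev a t = f t) F"
  show "\<exists>c. eventually (\<lambda>t. ev c t = cnj (f t)) F"
    by (rule exI[of _ "c_star A a"], rule ev2[OF a ev_star[of a]]) simp
qed

lemma rep_zero: "rep (\<lambda>t. 0)"
  unfolding rep_def using ev_zero by auto

lemma rep_one: "rep (\<lambda>t. 1)"
  unfolding rep_def using ev_one by auto

lemma rep_sum: "(\<And>i. i \<in> I \<Longrightarrow> rep (f i)) \<Longrightarrow> rep (\<lambda>t. \<Sum>i\<in>I. f i t)"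
proof (induction I rule: infinite_finite_induct)
  case (infinite A) then show ?case using rep_zero by simp
next
  case empty then show ?case using rep_zero by simp
next
  case (insert x I) then show ?case using rep_add[of "f x" "\<lambda>t. \<Sum>i\<in>I. f i t"] by simp
qed

lemma rep_power: "rep f \<Longrightarrow> rep (\<lambda>t. f t ^ n)"
  by (induction n) (auto intro: rep_one rep_mul)

lemma rep_diff: "rep f \<Longrightarrow> rep g \<Longrightarrow> rep (\<lambda>t. f t - g t)"
  using rep_add[of f "\<lambda>t. - g t"] rep_neg[of g] by simp

lemma rep_complete:
  fixes f :: "nat \<Rightarrow> real \<Rightarrow> complex"
  assumes "\<And>n. rep (f n)"
    and "\<And>e. e > 0 \<Longrightarrow> \<exists>N. \<forall>n\<ge>N. eventually (\<lambda>t. cmod (f n t - g t) \<le> e) F"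
  shows "rep g"
proof -
  from assms(1) have "\<forall>n. \<exists>a. eventually (\<lambda>t. ev a t = f n t) F" unfolding rep_def by blast
  then obtain a where a: "\<And>n. eventually (\<lambda>t. ev (a n) t = f n t) F" by metis
  have "\<exists>N. \<forall>n\<ge>N. eventually (\<lambda>t. cmod (ev (a n) t - g t) \<le> e) F" if "e > 0" for e
  proof -
    obtain N where N: "\<forall>n\<ge>N. eventually (\<lambda>t. cmod (f n t - g t) \<le> e) F" using assms(2)[OF \<open>e>0\<close>] by blast
    show ?thesis
    proof (rule exI[of _ N], intro allI impI)
    fix n assume "N \<le> n"
    show "eventually (\<lambda>t. cmod (ev (a n) t - g t) \<le> e) F"
      by (rule ev2[OF a[of n] N[rule_format, OF \<open>N \<le> n\<close>]]) simp
  qed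
  qed
  hence "\<exists>s. eventually (\<lambda>t. ev s t = g t) F" by (intro complete[of a g]) blast
  thus ?thesis unfolding rep_def .
qed

lemma norm_set_ne: "{C. 0 \<le> C \<and> eventually (\<lambda>t. cmod (ev a t) \<le> C) F} \<noteq> {}"
proof -
  obtain C where "eventually (\<lambda>t. cmod (ev a t) \<le> C) F" using bdd by blast
  hence "max C 0 \<in> {C. 0 \<le> C \<and> eventually (\<lambda>t. cmod (ev a t) \<le> C) F}"
    by (auto elim: eventually_mono)
  thus ?thesis by blast
qed

lemma cnorm_nonneg: "0 \<le> c_norm A a"
  unfolding norm_def using norm_set_ne[of a] by (intro cInf_greatest) blast+

lemma norm_le_iff: "0 \<le> e \<Longrightarrow> c_norm A a \<le> e \<longleftrightarrow> eventually (\<lambda>t. cmod (ev a t) \<le> e) F"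
proof
  assume e: "0 \<le> e" and le: "c_norm A a \<le> e"
  let ?S = "{C. 0 \<le> C \<and> eventually (\<lambda>t. cmod (ev a t) \<le> C) F}"
  have "eventually (\<lambda>t. cmod (ev a t) \<le> e + 1 / real (Suc m)) F" for m
  proof -
    have pos: "0 < 1 / real (Suc m)" by simp
    have "Inf ?S < e + 1 / real (Suc m)" using le pos unfolding norm_def by linarith
    moreover have "bdd_below ?S" by (rule bdd_belowI[of _ 0]) auto
    ultimately obtain C where "C \<in> ?S" "C < e + 1 / real (Suc m)"
      using norm_set_ne[of a] cInf_less_iff[of ?S] by blast
    thus ?thesis by (auto elim!: eventually_mono)
  qed
  hence "eventually (\<lambda>t. \<forall>m. cmod (ev a t) \<le> e + 1 / real (Suc m)) F" by (rule cnt)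
  thus "eventually (\<lambda>t. cmod (ev a t) \<le> e) F"
  proof (rule eventually_mono)
    fix t assume h: "\<forall>m. cmod (ev a t) \<le> e + 1 / real (Suc m)"
    show "cmod (ev a t) \<le> e"
    proof (rule field_le_epsilon)
      fix d :: real assume "d > 0"
      then obtain m where "1 / real (Suc m) < d" using nat_approx_posE by blast
      thus "cmod (ev a t) \<le> e + d" using h[rule_format, of m] by simp
    qed
  qed
next
  assume "0 \<le> e" "eventually (\<lambda>t. cmod (ev a t) \<le> e) F"
  moreover have "bdd_below {C. 0 \<le> C \<and> eventually (\<lambda>t. cmod (ev a t) \<le> C) F}" by (rule bdd_belowI[of _ 0]) blast
  ultimately show "c_norm A a \<le> e" unfolding norm_def by (intro cInf_lower) blast+
qed

lemma norm_bound: "eventually (\<lambda>t. cmod (ev a t) \<le> c_norm A a) F"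
  using norm_le_iff[OF cnorm_nonneg, of a a] by simp

end


lemma sq_ineq:
  fixes q u v :: real
  assumes "0 \<le> q" "q < 1" "0 \<le> u" "0 \<le> v"
  shows "(q * (u + v))\<^sup>2 \<le> q * u\<^sup>2 + q\<^sup>2 / (1 - q) * v\<^sup>2"
proof -
  have "q * u\<^sup>2 + q\<^sup>2 / (1 - q) * v\<^sup>2 - (q * (u + v))\<^sup>2 = q / (1 - q) * ((1 - q) * u - q * v)\<^sup>2"
    using assms by (simp add: field_simps power2_eq_square)
  moreover have "0 \<le> q / (1 - q) * ((1 - q) * u - q * v)\<^sup>2" using assms by simp
  ultimately show ?thesis by linarith
qed

lemma sum_shift_rec:
  fixes p c :: "nat \<Rightarrow> real"
  assumes "\<And>k. p (Suc k) \<le> q * p k + c (Suc k)"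
  shows "(\<Sum>k<m. p (Suc (j + k))) \<le> q * (\<Sum>k<m. p (j + k)) + (\<Sum>k<m. c (Suc (j + k)))"
proof (induction m)
  case 0 then show ?case by simp
next
  case (Suc m)
  have "p (Suc (j + m)) \<le> q * p (j + m) + c (Suc (j + m))" by (rule assms)
  with Suc show ?case by (simp add: distrib_left)
qed

lemma sum_shift_rec_back:
  fixes p c :: "nat \<Rightarrow> real"
  assumes "\<And>k. p k \<le> q * p (Suc k) + c k"
  shows "(\<Sum>k<m. p (j + k)) \<le> q * (\<Sum>k<m. p (Suc (j + k))) + (\<Sum>k<m. c (j + k))"
proof (induction m)
  case 0 then show ?case by simp
next
  case (Suc m)
  have "p (j + m) \<le> q * p (Suc (j + m)) + c (j + m)" by (rule assms)
  with Suc show ?case by (simp add: distrib_left)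
qed

lemma sum_split_last_first:
  fixes p :: "nat \<Rightarrow> real"
  shows "(\<Sum>k<m. p (Suc (j + k))) = (\<Sum>k<m. p (j + k)) - p j + p (j + m)"
  by (induction m) auto

primrec Yp :: "(nat \<Rightarrow> complex) \<Rightarrow> complex \<Rightarrow> nat \<Rightarrow> complex" where
  "Yp X b 0 = - b * X 0"
| "Yp X b (Suc k) = b * (Yp X b k - X (Suc k))"

declare Yp.simps [simp del]

definition Wf :: "(nat \<Rightarrow> complex) \<Rightarrow> complex \<Rightarrow> nat \<Rightarrow> complex" where
  "Wf V b j = - (\<Sum>i. cnj b ^ Suc i * V (j + i))"

context
  fixes q :: real and b :: complex
  assumes q0: "0 \<le> q" and q1: "q < 1" and bq: "cmod b \<le> q"
begin

lemma D_nonneg: "0 \<le> q\<^sup>2 / (1 - q)" using q1 by simp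

lemma Yp_step: "(cmod (Yp X b (Suc k)))\<^sup>2 \<le> q * (cmod (Yp X b k))\<^sup>2 + (q\<^sup>2 / (1 - q)) * (cmod (X (Suc k)))\<^sup>2"
proof -
  have "cmod (Yp X b (Suc k)) \<le> q * (cmod (Yp X b k) + cmod (X (Suc k)))"
    unfolding Yp.simps using bq norm_triangle_ineq4[of "Yp X b k" "X (Suc k)"] q0
    by (simp add: norm_mult) (metis mult_mono norm_ge_zero)
  hence "(cmod (Yp X b (Suc k)))\<^sup>2 \<le> (q * (cmod (Yp X b k) + cmod (X (Suc k))))\<^sup>2"
    by (simp add: power_mono)
  also have "\<dots> \<le> q * (cmod (Yp X b k))\<^sup>2 + (q\<^sup>2 / (1 - q)) * (cmod (X (Suc k)))\<^sup>2"
    by (rule sq_ineq[OF q0 q1]) auto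
  finally show ?thesis .
qed

lemma Yp_zero: "(cmod (Yp X b 0))\<^sup>2 \<le> (q\<^sup>2 / (1 - q)) * (cmod (X 0))\<^sup>2"
proof -
  have "cmod (Yp X b 0) \<le> q * cmod (X 0)" unfolding Yp.simps using bq by (simp add: norm_mult mult_right_mono)
  hence "(cmod (Yp X b 0))\<^sup>2 \<le> (q * cmod (X 0))\<^sup>2" by (simp add: power_mono)
  also have "\<dots> \<le> (q\<^sup>2 / (1 - q)) * (cmod (X 0))\<^sup>2"
    using q0 q1 by (simp add: power_mult_distrib mult_right_mono field_simps power2_eq_square)
  finally show ?thesis .
qed

lemma Yp_sum_bound: "(1 - q) * (\<Sum>k<n. (cmod (Yp X b k))\<^sup>2) \<le> (q\<^sup>2 / (1 - q)) * (\<Sum>k<n. (cmod (X k))\<^sup>2)"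
proof (cases n)
  case 0 then show ?thesis by simp
next
  case (Suc m)
  let ?p = "\<lambda>k. (cmod (Yp X b k))\<^sup>2" and ?c = "\<lambda>k. (q\<^sup>2 / (1 - q)) * (cmod (X k))\<^sup>2"
  have r: "(\<Sum>k<m. ?p (Suc (0 + k))) \<le> q * (\<Sum>k<m. ?p (0 + k)) + (\<Sum>k<m. ?c (Suc (0 + k)))"
    by (rule sum_shift_rec) (rule Yp_step)
  have e1: "(\<Sum>k<Suc m. ?p k) = ?p 0 + (\<Sum>k<m. ?p (Suc k))" by (simp only: sum.lessThan_Suc_shift)
  have e2: "?c 0 + (\<Sum>k<m. ?c (Suc k)) = (\<Sum>k<Suc m. ?c k)" by (simp only: sum.lessThan_Suc_shift)
  have e3: "(\<Sum>k<m. ?p k) \<le> (\<Sum>k<Suc m. ?p k)" by simp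
  have "q * (\<Sum>k<m. ?p k) \<le> q * (\<Sum>k<Suc m. ?p k)" using q0 e3 by (rule mult_left_mono[rotated])
  with e1 e2 r Yp_zero[of X] have "(\<Sum>k<Suc m. ?p k) \<le> q * (\<Sum>k<Suc m. ?p k) + (\<Sum>k<Suc m. ?c k)"
    by (simp only: add_0)
  moreover have "(\<Sum>k<Suc m. ?c k) = (q\<^sup>2 / (1 - q)) * (\<Sum>k<Suc m. (cmod (X k))\<^sup>2)" by (rule sum_distrib_left[symmetric])
  moreover have "(1 - q) * (\<Sum>k<Suc m. ?p k) = (\<Sum>k<Suc m. ?p k) - q * (\<Sum>k<Suc m. ?p k)" by (simp add: algebra_simps)
  ultimately show ?thesis using Suc by (simp only:)
qed

lemma Yp_iter: "(cmod (Yp X b (j + i)))\<^sup>2 \<le> q ^ i * (cmod (Yp X b j))\<^sup>2 + (q\<^sup>2 / (1 - q)) * (\<Sum>k<i. (cmod (X (Suc (j + k))))\<^sup>2)"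
proof (induction i)
  case 0 then show ?case by simp
next
  case (Suc i)
  have "(cmod (Yp X b (j + Suc i)))\<^sup>2 \<le> q * (cmod (Yp X b (j + i)))\<^sup>2 + (q\<^sup>2 / (1 - q)) * (cmod (X (Suc (j + i))))\<^sup>2"
    using Yp_step[of X "j + i"] by simp
  also have "\<dots> \<le> q * (q ^ i * (cmod (Yp X b j))\<^sup>2 + (q\<^sup>2 / (1 - q)) * (\<Sum>k<i. (cmod (X (Suc (j + k))))\<^sup>2)) + (q\<^sup>2 / (1 - q)) * (cmod (X (Suc (j + i))))\<^sup>2"
    using Suc q0 by (simp add: mult_left_mono)
  also have "\<dots> \<le> q ^ Suc i * (cmod (Yp X b j))\<^sup>2 + (q\<^sup>2 / (1 - q)) * (\<Sum>k<Suc i. (cmod (X (Suc (j + k))))\<^sup>2)"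
  proof -
    have "q * ((q\<^sup>2 / (1 - q)) * (\<Sum>k<i. (cmod (X (Suc (j + k))))\<^sup>2)) \<le> (q\<^sup>2 / (1 - q)) * (\<Sum>k<i. (cmod (X (Suc (j + k))))\<^sup>2)"
      using q0 q1 D_nonneg by (intro mult_left_le_one_le mult_nonneg_nonneg sum_nonneg) auto
    thus ?thesis by (simp add: algebra_simps)
  qed
  finally show ?case .
qed

lemma Yp_tail: "(1 - q) * (\<Sum>k<m. (cmod (Yp X b (Suc (j + k))))\<^sup>2)
   \<le> q * (cmod (Yp X b j))\<^sup>2 + (q\<^sup>2 / (1 - q)) * (\<Sum>k<m. (cmod (X (Suc (j + k))))\<^sup>2)"
proof -
  let ?p = "\<lambda>k. (cmod (Yp X b k))\<^sup>2" and ?c = "\<lambda>k. (q\<^sup>2 / (1 - q)) * (cmod (X k))\<^sup>2"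
  have r: "(\<Sum>k<m. ?p (Suc (j + k))) \<le> q * (\<Sum>k<m. ?p (j + k)) + (\<Sum>k<m. ?c (Suc (j + k)))"
    by (rule sum_shift_rec) (rule Yp_step)
  have e: "(\<Sum>k<m. ?p (j + k)) = (\<Sum>k<m. ?p (Suc (j + k))) + ?p j - ?p (j + m)"
    using sum_split_last_first[where p="?p" and m=m and j=j] by simp
  have "(\<Sum>k<m. ?p (j + k)) \<le> (\<Sum>k<m. ?p (Suc (j + k))) + ?p j" unfolding e by simp
  hence "q * (\<Sum>k<m. ?p (j + k)) \<le> q * ((\<Sum>k<m. ?p (Suc (j + k))) + ?p j)" using q0 by (intro mult_left_mono)
  moreover have "(\<Sum>k<m. ?c (Suc (j + k))) = (q\<^sup>2 / (1 - q)) * (\<Sum>k<m. (cmod (X (Suc (j + k))))\<^sup>2)" by (simp add: sum_distrib_left)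
  ultimately show ?thesis using r by (simp only: algebra_simps)
qed


lemma geo_summable: "summable (\<lambda>i. B * q ^ i)"
  using q0 q1 by (intro summable_mult summable_geometric) simp

lemma W_summable:
  assumes "\<And>k. cmod (V k) \<le> B"
  shows "summable (\<lambda>i. cnj b ^ Suc i * V (j + i))"
proof (rule summable_comparison_test'[OF geo_summable[of B]])
  fix i :: nat
  have "cmod (cnj b ^ Suc i * V (j + i)) = cmod b ^ Suc i * cmod (V (j + i))" by (simp add: norm_mult norm_power)
  also have "\<dots> \<le> q ^ i * B"
  proof (rule mult_mono)
    have "cmod b ^ Suc i \<le> cmod b ^ i" using bq q1 by (simp add: power_decreasing mult_left_le_one_le)
    also have "\<dots> \<le> q ^ i" using bq by (simp add: power_mono)
    finally show "cmod b ^ Suc i \<le> q ^ i" .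
  qed (use assms q0 in auto)
  finally show "cmod (cnj b ^ Suc i * V (j + i)) \<le> B * q ^ i" by (simp add: mult.commute)
qed

lemma W_rec:
  assumes "\<And>k. cmod (V k) \<le> B"
  shows "Wf V b j = cnj b * (Wf V b (Suc j) - V j)"
proof -
  let ?f = "\<lambda>i. cnj b ^ Suc i * V (j + i)"
  have s: "summable ?f" by (rule W_summable[OF assms])
  have s2: "summable (\<lambda>i. cnj b ^ Suc i * V (Suc j + i))" by (rule W_summable[OF assms])
  have "(\<Sum>i. ?f (Suc i)) = suminf ?f - ?f 0" by (rule suminf_split_head[OF s])
  moreover have "(\<Sum>i. ?f (Suc i)) = cnj b * (\<Sum>i. cnj b ^ Suc i * V (Suc j + i))"
    by (subst suminf_mult[OF s2, symmetric]) (simp add: mult.assoc)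
  ultimately have h: "suminf ?f - ?f 0 = cnj b * (\<Sum>i. cnj b ^ Suc i * V (Suc j + i))" by simp
  have "suminf ?f = cnj b * V j + cnj b * (\<Sum>i. cnj b ^ Suc i * V (Suc j + i))"
  proof -
    have "suminf ?f = (suminf ?f - ?f 0) + ?f 0" by simp
    also have "\<dots> = cnj b * (\<Sum>i. cnj b ^ Suc i * V (Suc j + i)) + cnj b * V j" unfolding h by simp
    finally show ?thesis by simp
  qed
  thus ?thesis unfolding Wf_def by (simp add: algebra_simps)
qed

lemma W_bound:
  assumes "\<And>k. cmod (V k) \<le> B" and "\<And>k. k \<ge> j \<Longrightarrow> cmod (V k) \<le> e"
  shows "cmod (Wf V b j) \<le> e / (1 - q)"
proof -
  let ?f = "\<lambda>i. cnj b ^ Suc i * V (j + i)"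
  have e0: "0 \<le> e" using assms(2)[of j] by (meson norm_ge_zero order.trans order_refl)
  have nb: "norm (?f i) \<le> e * q ^ i" for i
  proof -
    have "cmod (?f i) = cmod b ^ Suc i * cmod (V (j + i))" by (simp add: norm_mult norm_power)
    also have "\<dots> \<le> q ^ i * e"
    proof (rule mult_mono)
      have "cmod b ^ Suc i \<le> cmod b ^ i" using bq q1 by (simp add: power_decreasing mult_left_le_one_le)
      also have "\<dots> \<le> q ^ i" using bq by (simp add: power_mono)
      finally show "cmod b ^ Suc i \<le> q ^ i" .
    qed (use assms(2) q0 in auto)
    finally show ?thesis by (simp add: mult.commute)
  qed
  have sn: "summable (\<lambda>i. norm (?f i))"
    by (rule summable_comparison_test'[OF geo_summable[of e]]) (use nb in auto)
  have "cmod (Wf V b j) = norm (suminf ?f)" unfolding Wf_def by simp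
  also have "\<dots> \<le> (\<Sum>i. norm (?f i))" by (rule summable_norm[OF sn])
  also have "\<dots> \<le> (\<Sum>i. e * q ^ i)" by (rule suminf_le[OF nb sn geo_summable])
  also have "\<dots> = e * (1 / (1 - q))" using q0 q1 by (subst suminf_mult) (auto simp: suminf_geometric)
  finally show ?thesis by simp
qed

lemma W_tendsto:
  assumes "\<And>k. cmod (V k) \<le> B" and "V \<longlonglongrightarrow> 0"
  shows "(\<lambda>j. Wf V b j) \<longlonglongrightarrow> 0"
proof (rule LIMSEQ_I)
  fix r :: real assume "0 < r"
  hence "0 < r * (1 - q) / 2" using q1 by simp
  then obtain N where N: "\<And>n. n \<ge> N \<Longrightarrow> norm (V n - 0) < r * (1 - q) / 2"
    using LIMSEQ_D[OF assms(2)] by blast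
  show "\<exists>N. \<forall>n\<ge>N. norm (Wf V b n - 0) < r"
  proof (intro exI allI impI)
    fix n assume "N \<le> n"
    have "cmod (Wf V b n) \<le> (r * (1 - q) / 2) / (1 - q)"
      by (rule W_bound[OF assms(1)]) (use N \<open>N \<le> n\<close> in \<open>fastforce intro: less_imp_le\<close>)
    also have "\<dots> = r / 2" using q1 by (simp add: field_simps)
    also have "\<dots> < r" using \<open>0 < r\<close> by simp
    finally show "norm (Wf V b n - 0) < r" by simp
  qed
qed

lemma W_step:
  assumes "\<And>k. cmod (V k) \<le> B"
  shows "(cmod (Wf V b j))\<^sup>2 \<le> q * (cmod (Wf V b (Suc j)))\<^sup>2 + (q\<^sup>2 / (1 - q)) * (cmod (V j))\<^sup>2"
proof -
  have "cmod (Wf V b j) \<le> q * (cmod (Wf V b (Suc j)) + cmod (V j))"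
    unfolding W_rec[OF assms, where j=j] using bq norm_triangle_ineq4[of "Wf V b (Suc j)" "V j"] q0
    by (simp add: norm_mult) (metis mult_mono norm_ge_zero)
  hence "(cmod (Wf V b j))\<^sup>2 \<le> (q * (cmod (Wf V b (Suc j)) + cmod (V j)))\<^sup>2"
    by (simp add: power_mono)
  also have "\<dots> \<le> q * (cmod (Wf V b (Suc j)))\<^sup>2 + (q\<^sup>2 / (1 - q)) * (cmod (V j))\<^sup>2"
    by (rule sq_ineq[OF q0 q1]) auto
  finally show ?thesis .
qed

lemma W_tail:
  assumes "\<And>k. cmod (V k) \<le> B" and "V \<longlonglongrightarrow> 0" and T: "\<And>m. (\<Sum>k<m. (cmod (V (j + k)))\<^sup>2) \<le> T"
  shows "(1 - q) * (\<Sum>k<m. (cmod (Wf V b (j + k)))\<^sup>2) \<le> (q\<^sup>2 / (1 - q)) * T"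
proof -
  let ?p = "\<lambda>k. (cmod (Wf V b k))\<^sup>2" and ?c = "\<lambda>k. (q\<^sup>2 / (1 - q)) * (cmod (V k))\<^sup>2"
  have key: "(1 - q) * (\<Sum>k<m'. ?p (j + k)) \<le> q * ?p (j + m') + (q\<^sup>2 / (1 - q)) * T" for m'
  proof -
    have r: "(\<Sum>k<m'. ?p (j + k)) \<le> q * (\<Sum>k<m'. ?p (Suc (j + k))) + (\<Sum>k<m'. ?c (j + k))"
      by (rule sum_shift_rec_back) (rule W_step[OF assms(1)])
    have e: "(\<Sum>k<m'. ?p (Suc (j + k))) = (\<Sum>k<m'. ?p (j + k)) - ?p j + ?p (j + m')"
      by (rule sum_split_last_first)
    have "(\<Sum>k<m'. ?p (Suc (j + k))) \<le> (\<Sum>k<m'. ?p (j + k)) + ?p (j + m')" unfolding e by simp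
    hence "q * (\<Sum>k<m'. ?p (Suc (j + k))) \<le> q * ((\<Sum>k<m'. ?p (j + k)) + ?p (j + m'))" using q0 by (intro mult_left_mono)
    moreover have "(\<Sum>k<m'. ?c (j + k)) = (q\<^sup>2 / (1 - q)) * (\<Sum>k<m'. (cmod (V (j + k)))\<^sup>2)" by (rule sum_distrib_left[symmetric])
    moreover have "(q\<^sup>2 / (1 - q)) * (\<Sum>k<m'. (cmod (V (j + k)))\<^sup>2) \<le> (q\<^sup>2 / (1 - q)) * T" using T D_nonneg by (intro mult_left_mono)
    ultimately show ?thesis using r by (simp only: algebra_simps)
  qed
  have lim: "(\<lambda>m'. q * ?p (j + m') + (q\<^sup>2 / (1 - q)) * T) \<longlonglongrightarrow> q * 0 + (q\<^sup>2 / (1 - q)) * T"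
  proof (intro tendsto_intros)
    have "(\<lambda>m'. Wf V b (m' + j)) \<longlonglongrightarrow> 0"
      using W_tendsto[OF assms(1,2)] by (rule LIMSEQ_ignore_initial_segment)
    hence "(\<lambda>m'. Wf V b (j + m')) \<longlonglongrightarrow> 0" by (simp add: add.commute)
    hence "(\<lambda>m'. cmod (Wf V b (j + m'))) \<longlonglongrightarrow> 0" using tendsto_norm_zero by blast
    thus "(\<lambda>m'. ?p (j + m')) \<longlonglongrightarrow> 0" using tendsto_power[of _ 0 _ 2] by fastforce
  qed
  have "(1 - q) * (\<Sum>k<m. ?p (j + k)) \<le> q * 0 + (q\<^sup>2 / (1 - q)) * T"
  proof (rule LIMSEQ_le_const[OF lim], intro exI allI impI)
    fix m' assume "m \<le> m'"
    have "(\<Sum>k<m. ?p (j + k)) \<le> (\<Sum>k<m'. ?p (j + k))"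
      using \<open>m \<le> m'\<close> by (intro sum_mono2) auto
    hence "(1 - q) * (\<Sum>k<m. ?p (j + k)) \<le> (1 - q) * (\<Sum>k<m'. ?p (j + k))" using q1 by (intro mult_left_mono) auto
    also have "\<dots> \<le> q * ?p (j + m') + (q\<^sup>2 / (1 - q)) * T" by (rule key)
    finally show "(1 - q) * (\<Sum>k<m. ?p (j + k)) \<le> q * ?p (j + m') + (q\<^sup>2 / (1 - q)) * T" .
  qed
  thus ?thesis by simp
qed

end

lemma l2_prod_summable:
  fixes f g :: "nat \<Rightarrow> complex"
  assumes "summable (\<lambda>k. (cmod (f k))\<^sup>2)" "summable (\<lambda>k. (cmod (g k))\<^sup>2)"
  shows "summable (\<lambda>k. cnj (f k) * g k)"
proof (rule summable_comparison_test'[where N=0])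
  show "summable (\<lambda>k. ((cmod (f k))\<^sup>2 + (cmod (g k))\<^sup>2) / 2)"
    using assms by (intro summable_divide summable_add)
  fix k :: nat
  have "0 \<le> (cmod (f k) - cmod (g k))\<^sup>2" by simp
  hence "cmod (f k) * cmod (g k) \<le> ((cmod (f k))\<^sup>2 + (cmod (g k))\<^sup>2) / 2"
    by (simp add: power2_eq_square algebra_simps)
  thus "norm (cnj (f k) * g k) \<le> ((cmod (f k))\<^sup>2 + (cmod (g k))\<^sup>2) / 2" by (simp add: norm_mult)
qed

lemma adj_gen:
  fixes X Y V W :: "nat \<Rightarrow> complex" and a :: complex
  assumes X0: "X 0 = - a * Y 0" and XS: "\<And>k. X (Suc k) = Y k - a * Y (Suc k)"
    and VW: "\<And>k. V k = W (Suc k) - cnj a * W k"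
    and sX: "summable (\<lambda>k. (cmod (X k))\<^sup>2)" and sY: "summable (\<lambda>k. (cmod (Y k))\<^sup>2)"
    and sV: "summable (\<lambda>k. (cmod (V k))\<^sup>2)" and sW: "summable (\<lambda>k. (cmod (W k))\<^sup>2)"
  shows "(\<Sum>k. cnj (Y k) * V k) = (\<Sum>k. cnj (X k) * W k)"
proof -
  define P where "P k = cnj (Y k) * W (Suc k)" for k
  define Q where "Q k = cnj a * (cnj (Y k) * W k)" for k
  have sW': "summable (\<lambda>k. (cmod (W (Suc k)))\<^sup>2)" using sW by (subst summable_Suc_iff)
  have sP: "summable P" unfolding P_def by (rule l2_prod_summable[OF sY sW'])
  have sQ: "summable Q" unfolding Q_def by (rule summable_mult[OF l2_prod_summable[OF sY sW]])
  have sR: "summable (\<lambda>k. cnj (X k) * W k)" by (rule l2_prod_summable[OF sX sW])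
  have "(\<Sum>k. cnj (Y k) * V k) = (\<Sum>k. P k - Q k)"
    unfolding P_def Q_def VW by (simp add: algebra_simps)
  also have "\<dots> = suminf P - suminf Q" by (rule suminf_diff[OF sP sQ, symmetric])
  finally have L: "(\<Sum>k. cnj (Y k) * V k) = suminf P - suminf Q" .
  have h1: "(\<Sum>k. cnj (X (Suc k)) * W (Suc k)) = (\<Sum>k. cnj (X k) * W k) - cnj (X 0) * W 0"
    by (rule suminf_split_head[OF sR])
  have h2: "(\<Sum>k. cnj (X (Suc k)) * W (Suc k)) = (\<Sum>k. P k - Q (Suc k))"
    unfolding P_def Q_def XS by (simp add: algebra_simps)
  have h3: "(\<Sum>k. P k - Q (Suc k)) = suminf P - (\<Sum>k. Q (Suc k))"
    by (rule suminf_diff[OF sP, symmetric]) (use sQ in \<open>simp add: summable_Suc_iff\<close>)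
  have h4: "(\<Sum>k. Q (Suc k)) = suminf Q - Q 0" by (rule suminf_split_head[OF sQ])
  have h5: "cnj (X 0) * W 0 = - Q 0" unfolding Q_def X0 by simp
  have "(\<Sum>k. cnj (X k) * W k) = (\<Sum>k. cnj (X (Suc k)) * W (Suc k)) + cnj (X 0) * W 0"
    unfolding h1 by simp
  also have "\<dots> = (suminf P - (suminf Q - Q 0)) + (- Q 0)" unfolding h2 h3 h4 h5 ..
  also have "\<dots> = suminf P - suminf Q" by simp
  finally show ?thesis unfolding L by simp
qed


lemma sum_lt_add: "(\<Sum>k<m + n. f k) = (\<Sum>k<m. f k) + (\<Sum>k<n. f (m + k))" for n :: nat
  by (induction n) (auto simp: add.assoc)

context falg begin

definition utail :: "(nat \<Rightarrow> real \<Rightarrow> real) \<Rightarrow> bool" where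
  "utail h \<longleftrightarrow> (\<forall>e>0. \<exists>N. eventually (\<lambda>t. \<forall>n\<ge>N. \<forall>m. (\<Sum>k<m. h (n + k) t) \<le> e) F)"

lemma psum_ev: "eventually (\<lambda>t. \<forall>n. ev (psum A f n) t = (\<Sum>k<n. ev (f k) t)) F"
proof (rule cnt)
  fix n show "eventually (\<lambda>t. ev (psum A f n) t = (\<Sum>k<n. ev (f k) t)) F"
  proof (induction n)
    case 0 show ?case using ev_zero by simp
  next
    case (Suc n)
    show ?case by (rule ev2[OF Suc ev_add[of "psum A f n" "f n"]]) simp
  qed
qed

lemma conv_iff: "conv_to A f s \<longleftrightarrow>
   (\<forall>e>0. \<exists>N. \<forall>n\<ge>N. eventually (\<lambda>t. cmod ((\<Sum>k<n. ev (f k) t) - ev s t) \<le> e) F)"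
proof -
  let ?a = "\<lambda>n. c_add A (psum A f n) (c_neg A s)"
  have E: "c_norm A (?a n) \<le> e \<longleftrightarrow> eventually (\<lambda>t. cmod ((\<Sum>k<n. ev (f k) t) - ev s t) \<le> e) F"
    if "0 \<le> e" for n e
  proof -
    have ee: "eventually (\<lambda>t. ev (?a n) t = (\<Sum>k<n. ev (f k) t) - ev s t) F"
      by (rule ev3[OF psum_ev[of f] ev_add[of "psum A f n" "c_neg A s"] ev_neg[of s]]) simp
    have "c_norm A (?a n) \<le> e \<longleftrightarrow> eventually (\<lambda>t. cmod (ev (?a n) t) \<le> e) F" by (rule norm_le_iff[OF that])
    also have "\<dots> \<longleftrightarrow> eventually (\<lambda>t. cmod ((\<Sum>k<n. ev (f k) t) - ev s t) \<le> e) F"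
      by (rule eventually_subst[OF eventually_mono[OF ee]]) simp
    finally show ?thesis .
  qed
  have "conv_to A f s \<longleftrightarrow> (\<forall>e>0. \<exists>N. \<forall>n\<ge>N. c_norm A (?a n) \<le> e)"
  proof
    assume "conv_to A f s"
    hence L: "(\<lambda>n. c_norm A (?a n)) \<longlonglongrightarrow> 0" unfolding conv_to_def .
    show "\<forall>e>0. \<exists>N. \<forall>n\<ge>N. c_norm A (?a n) \<le> e"
    proof (intro allI impI)
      fix e :: real assume "e > 0"
      from LIMSEQ_D[OF L this] obtain N where "\<And>n. n \<ge> N \<Longrightarrow> norm (c_norm A (?a n) - 0) < e" by blast
      thus "\<exists>N. \<forall>n\<ge>N. c_norm A (?a n) \<le> e" by (intro exI[of _ N]) (smt (verit) real_norm_def)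
    qed
  next
    assume H: "\<forall>e>0. \<exists>N. \<forall>n\<ge>N. c_norm A (?a n) \<le> e"
    show "conv_to A f s" unfolding conv_to_def
    proof (rule LIMSEQ_I)
      fix r :: real assume "r > 0"
      then obtain N where "\<forall>n\<ge>N. c_norm A (?a n) \<le> r / 2" using H[rule_format, of "r/2"] by auto
      thus "\<exists>N. \<forall>n\<ge>N. norm (c_norm A (?a n) - 0) < r"
      proof (intro exI[of _ N] allI impI)
        fix n assume "N \<le> n"
        hence "c_norm A (?a n) \<le> r / 2" using \<open>\<forall>n\<ge>N. c_norm A (?a n) \<le> r / 2\<close> by blast
        moreover have "0 \<le> c_norm A (?a n)" by (rule cnorm_nonneg)
        ultimately show "norm (c_norm A (?a n) - 0) < r" using \<open>r > 0\<close> by simp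
      qed
    qed
  qed
  also have "\<dots> \<longleftrightarrow> (\<forall>e>0. \<exists>N. \<forall>n\<ge>N. eventually (\<lambda>t. cmod ((\<Sum>k<n. ev (f k) t) - ev s t) \<le> e) F)"
    using E by (meson less_imp_le)
  finally show ?thesis .
qed

lemma choose_N:
  assumes "\<And>e. e > 0 \<Longrightarrow> \<exists>N. P e N"
  obtains Nf where "\<And>m. P (1 / real (Suc m)) (Nf m)"
proof -
  have "\<forall>m. \<exists>N. P (1 / real (Suc m)) N" using assms by simp
  thus ?thesis using that by metis
qed

lemma small_le: "(\<And>m. (x::real) \<le> 1 / real (Suc m)) \<Longrightarrow> x \<le> 0"
proof (rule ccontr)
  assume h: "\<And>m. x \<le> 1 / real (Suc m)" and "\<not> x \<le> 0"
  then obtain m where "1 / real (Suc m) < x" using nat_approx_posE by (metis not_le)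
  with h[of m] show False by simp
qed

lemma conv_ev:
  assumes "conv_to A f s"
  shows "eventually (\<lambda>t. (\<lambda>k. ev (f k) t) sums ev s t) F"
proof -
  obtain Nf where Nf: "\<And>m. \<forall>n\<ge>Nf m. eventually (\<lambda>t. cmod ((\<Sum>k<n. ev (f k) t) - ev s t) \<le> 1 / real (Suc m)) F"
    using choose_N[of "\<lambda>e N. \<forall>n\<ge>N. eventually (\<lambda>t. cmod ((\<Sum>k<n. ev (f k) t) - ev s t) \<le> e) F"]
      assms unfolding conv_iff by blast
  have "eventually (\<lambda>t. \<forall>m n. n \<ge> Nf m \<longrightarrow> cmod ((\<Sum>k<n. ev (f k) t) - ev s t) \<le> 1 / real (Suc m)) F"
    by (rule cnt2) (use Nf in \<open>cases; auto elim!: eventually_mono\<close>)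
  thus ?thesis
  proof (rule eventually_mono)
    fix t assume H: "\<forall>m n. n \<ge> Nf m \<longrightarrow> cmod ((\<Sum>k<n. ev (f k) t) - ev s t) \<le> 1 / real (Suc m)"
    show "(\<lambda>k. ev (f k) t) sums ev s t" unfolding sums_def
    proof (rule LIMSEQ_I)
      fix r :: real assume "r > 0"
      then obtain m where m: "1 / real (Suc m) < r" using nat_approx_posE by blast
      show "\<exists>N. \<forall>n\<ge>N. norm ((\<Sum>k<n. ev (f k) t) - ev s t) < r"
        using H m by (intro exI[of _ "Nf m"]) (auto intro: le_less_trans)
    qed
  qed
qed

lemma conv_unique: "conv_to A f s \<Longrightarrow> conv_to A f s' \<Longrightarrow> s = s'"
proof -
  assume a: "conv_to A f s" "conv_to A f s'"
  show "s = s'" by (rule ev_eq, rule ev2[OF conv_ev[OF a(1)] conv_ev[OF a(2)]]) (rule sums_unique2)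
qed

lemma conv_ex:
  assumes B: "eventually (\<lambda>t. \<forall>k. cmod (ev (f k) t) \<le> h k t) F"
    and h0: "\<And>k t. 0 \<le> h k t" and U: "utail h"
  shows "\<exists>s. conv_to A f s"
proof -
  obtain Nf where Nf: "\<And>m. eventually (\<lambda>t. \<forall>n\<ge>Nf m. \<forall>M. (\<Sum>k<M. h (n + k) t) \<le> 1 / real (Suc m)) F"
    using choose_N[of "\<lambda>e N. eventually (\<lambda>t. \<forall>n\<ge>N. \<forall>M. (\<Sum>k<M. h (n + k) t) \<le> e) F"] U
    unfolding utail_def by blast
  have G: "eventually (\<lambda>t. \<forall>m. \<forall>n\<ge>Nf m. \<forall>M. (\<Sum>k<M. h (n + k) t) \<le> 1 / real (Suc m)) F"
    by (rule cnt) (rule Nf)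
  define g where "g t = (\<Sum>k. ev (f k) t)" for t
  have good: "summable (\<lambda>k. h k t) \<and> summable (\<lambda>k. ev (f k) t) \<and>
      (\<forall>m. \<forall>n\<ge>Nf m. cmod ((\<Sum>k<n. ev (f k) t) - g t) \<le> 1 / real (Suc m))"
    if H: "\<forall>m. \<forall>n\<ge>Nf m. \<forall>M. (\<Sum>k<M. h (n + k) t) \<le> 1 / real (Suc m)"
      and Bt: "\<forall>k. cmod (ev (f k) t) \<le> h k t" for t
  proof -
    have sh: "summable (\<lambda>k. h k t)"
    proof (rule bounded_imp_summable[OF h0])
      fix n
      have "(\<Sum>k\<le>n. h k t) \<le> (\<Sum>k<Nf 0 + Suc n. h k t)" by (intro sum_mono2) (auto simp: h0)
      also have "\<dots> = (\<Sum>k<Nf 0. h k t) + (\<Sum>k<Suc n. h (Nf 0 + k) t)" by (rule sum_lt_add)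
      also have "\<dots> \<le> (\<Sum>k<Nf 0. h k t) + 1" using H[rule_format, of 0 "Nf 0" "Suc n"] by simp
      finally show "(\<Sum>k\<le>n. h k t) \<le> (\<Sum>k<Nf 0. h k t) + 1" .
    qed
    have sf: "summable (\<lambda>k. ev (f k) t)"
      by (rule summable_comparison_test'[OF sh, where N=0]) (use Bt in auto)
    have "cmod ((\<Sum>k<n. ev (f k) t) - g t) \<le> 1 / real (Suc m)" if "n \<ge> Nf m" for m n
    proof -
      have "g t = (\<Sum>k. ev (f (k + n)) t) + (\<Sum>k<n. ev (f k) t)"
        unfolding g_def by (rule suminf_split_initial_segment[OF sf])
      hence "cmod ((\<Sum>k<n. ev (f k) t) - g t) = cmod (\<Sum>k. ev (f (k + n)) t)" by (simp add: norm_minus_commute)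
      also have "\<dots> \<le> (\<Sum>k. h (k + n) t)"
      proof -
        have s1: "summable (\<lambda>k. h (k + n) t)" by (rule summable_ignore_initial_segment[OF sh])
        have s2: "summable (\<lambda>k. cmod (ev (f (k + n)) t))"
          by (rule summable_comparison_test'[OF s1, where N=0]) (use Bt in auto)
        have "cmod (\<Sum>k. ev (f (k + n)) t) \<le> (\<Sum>k. cmod (ev (f (k + n)) t))" by (rule summable_norm[OF s2])
        also have "\<dots> \<le> (\<Sum>k. h (k + n) t)" by (rule suminf_le[OF _ s2 s1]) (use Bt in auto)
        finally show ?thesis .
      qed
      also have "\<dots> \<le> 1 / real (Suc m)"
      proof (rule suminf_le_const[OF summable_ignore_initial_segment[OF sh]])
        fix M show "(\<Sum>k<M. h (k + n) t) \<le> 1 / real (Suc m)"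
          using H[rule_format, OF that, of M] by (simp add: add.commute)
      qed
      finally show ?thesis .
    qed
    thus ?thesis using sh sf by blast
  qed
  have GG: "eventually (\<lambda>t. \<forall>m. \<forall>n\<ge>Nf m. cmod ((\<Sum>k<n. ev (f k) t) - g t) \<le> 1 / real (Suc m)) F"
    by (rule ev2[OF G B]) (use good in blast)
  have conv: "\<exists>N. \<forall>n\<ge>N. eventually (\<lambda>t. cmod ((\<Sum>k<n. ev (f k) t) - g t) \<le> e) F" if "e > 0" for e
  proof -
    obtain m where m: "1 / real (Suc m) < e" using nat_approx_posE \<open>e > 0\<close> by blast
    show ?thesis
      by (rule exI[of _ "Nf m"], intro allI impI, rule eventually_mono[OF GG]) (use m in \<open>fastforce\<close>)
  qed
  have "\<exists>s. eventually (\<lambda>t. ev s t = g t) F"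
  proof (rule complete[of "psum A f"])
    fix e :: real assume "e > 0"
    then obtain N where N: "\<forall>n\<ge>N. eventually (\<lambda>t. cmod ((\<Sum>k<n. ev (f k) t) - g t) \<le> e) F" using conv by blast
    show "\<exists>N. \<forall>n\<ge>N. eventually (\<lambda>t. cmod (ev (psum A f n) t - g t) \<le> e) F"
      by (rule exI[of _ N], intro allI impI, rule ev2[OF psum_ev[of f] N[rule_format]]) auto
  qed
  then obtain s where s: "eventually (\<lambda>t. ev s t = g t) F" by blast
  have "conv_to A f s" unfolding conv_iff
  proof (intro allI impI)
    fix e :: real assume "e > 0"
    then obtain N where N: "\<forall>n\<ge>N. eventually (\<lambda>t. cmod ((\<Sum>k<n. ev (f k) t) - g t) \<le> e) F" using conv by blast
    show "\<exists>N. \<forall>n\<ge>N. eventually (\<lambda>t. cmod ((\<Sum>k<n. ev (f k) t) - ev s t) \<le> e) F"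
      by (rule exI[of _ N], intro allI impI, rule ev2[OF s N[rule_format]]) auto
  qed
  thus ?thesis by blast
qed

end


context falg begin

lemma cnj_mult_self: "cnj z * z = complex_of_real ((cmod z)\<^sup>2)"
proof -
  have "cnj z * z = z * cnj z" by (rule mult.commute)
  also have "\<dots> = complex_of_real ((cmod z)\<^sup>2)" by (rule complex_norm_square[symmetric])
  finally show ?thesis .
qed

lemma ev_inner_terms': "eventually (\<lambda>t. \<forall>k. ev (c_mul A (c_star A (x k)) (y k)) t = cnj (ev (x k) t) * ev (y k) t) F"
  for x y :: "nat \<Rightarrow> 'a"
proof (rule cnt)
  fix k
  show "eventually (\<lambda>t. ev (c_mul A (c_star A (x k)) (y k)) t = cnj (ev (x k) t) * ev (y k) t) F"
    by (rule ev2[OF ev_mul[of "c_star A (x k)" "y k"] ev_star[of "x k"]]) simp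
qed

lemma HA_iff: "x \<in> HA A \<longleftrightarrow> utail (\<lambda>k t. (cmod (ev (x k) t))\<^sup>2)"
proof
  assume "x \<in> HA A"
  then obtain s where s: "conv_to A (\<lambda>k. c_mul A (c_star A (x k)) (x k)) s" unfolding HA_def by blast
  show "utail (\<lambda>k t. (cmod (ev (x k) t))\<^sup>2)" unfolding utail_def
  proof (intro allI impI)
    fix e :: real assume "e > 0"
    then obtain N where N: "\<forall>n\<ge>N. eventually (\<lambda>t. cmod ((\<Sum>k<n. ev (c_mul A (c_star A (x k)) (x k)) t) - ev s t) \<le> e / 2) F"
      using s unfolding conv_iff by (meson half_gt_zero)
    have E: "eventually (\<lambda>t. \<forall>n. n \<ge> N \<longrightarrow> cmod ((\<Sum>k<n. ev (c_mul A (c_star A (x k)) (x k)) t) - ev s t) \<le> e / 2) F"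
      by (rule cnt) (use N in \<open>cases; auto elim!: eventually_mono\<close>)
    show "\<exists>N. eventually (\<lambda>t. \<forall>n\<ge>N. \<forall>m. (\<Sum>k<m. (cmod (ev (x (n + k)) t))\<^sup>2) \<le> e) F"
    proof (rule exI[of _ N], rule ev2[OF E ev_inner_terms'[of x x]], intro allI impI)
      fix t n m
      assume H: "\<forall>n. N \<le> n \<longrightarrow> cmod ((\<Sum>k<n. ev (c_mul A (c_star A (x k)) (x k)) t) - ev s t) \<le> e / 2"
        and T: "\<forall>k. ev (c_mul A (c_star A (x k)) (x k)) t = cnj (ev (x k) t) * ev (x k) t" and "N \<le> n"
      let ?S = "\<lambda>n. (\<Sum>k<n. ev (c_mul A (c_star A (x k)) (x k)) t)"
      have Sr: "?S n = of_real (\<Sum>k<n. (cmod (ev (x k) t))\<^sup>2)" for n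
        using T by (simp only: cnj_mult_self of_real_sum)
      have hh: "?S (n + m) - ?S n = of_real (\<Sum>k<m. (cmod (ev (x (n + k)) t))\<^sup>2)"
        unfolding Sr sum_lt_add by simp
      have nn: "0 \<le> (\<Sum>k<m. (cmod (ev (x (n + k)) t))\<^sup>2)" by (intro sum_nonneg) simp
      have "(\<Sum>k<m. (cmod (ev (x (n + k)) t))\<^sup>2) = cmod (?S (n + m) - ?S n)"
        by (simp only: hh norm_of_real abs_of_nonneg[OF nn])
      also have "\<dots> \<le> cmod (?S (n + m) - ev s t) + cmod (?S n - ev s t)"
        using norm_triangle_ineq4[of "?S (n + m) - ev s t" "?S n - ev s t"] by simp
      also have "\<dots> \<le> e / 2 + e / 2" using H \<open>N \<le> n\<close> by (intro add_mono) auto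
      finally show "(\<Sum>k<m. (cmod (ev (x (n + k)) t))\<^sup>2) \<le> e" by simp
    qed
  qed
next
  assume U: "utail (\<lambda>k t. (cmod (ev (x k) t))\<^sup>2)"
  have "\<exists>s. conv_to A (\<lambda>k. c_mul A (c_star A (x k)) (x k)) s"
  proof (rule conv_ex[OF _ _ U])
    show "eventually (\<lambda>t. \<forall>k. cmod (ev (c_mul A (c_star A (x k)) (x k)) t) \<le> (cmod (ev (x k) t))\<^sup>2) F"
      by (rule eventually_mono[OF ev_inner_terms'[of x x]]) (simp add: norm_mult power2_eq_square)
  qed simp
  thus "x \<in> HA A" unfolding HA_def by blast
qed

lemma utail_add:
  assumes "utail f" "utail g"
  shows "utail (\<lambda>k t. (f k t + g k t) / 2)"
  unfolding utail_def
proof (intro allI impI)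
  fix e :: real assume "e > 0"
  obtain N1 where N1: "eventually (\<lambda>t. \<forall>n\<ge>N1. \<forall>m. (\<Sum>k<m. f (n + k) t) \<le> e) F"
    using assms(1) \<open>e > 0\<close> unfolding utail_def by blast
  obtain N2 where N2: "eventually (\<lambda>t. \<forall>n\<ge>N2. \<forall>m. (\<Sum>k<m. g (n + k) t) \<le> e) F"
    using assms(2) \<open>e > 0\<close> unfolding utail_def by blast
  show "\<exists>N. eventually (\<lambda>t. \<forall>n\<ge>N. \<forall>m. (\<Sum>k<m. (f (n + k) t + g (n + k) t) / 2) \<le> e) F"
  proof (rule exI[of _ "max N1 N2"], rule ev2[OF N1 N2], intro allI impI)
    fix t n m
    assume "\<forall>n\<ge>N1. \<forall>m. (\<Sum>k<m. f (n + k) t) \<le> e" "\<forall>n\<ge>N2. \<forall>m. (\<Sum>k<m. g (n + k) t) \<le> e" "max N1 N2 \<le> n"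
    hence "(\<Sum>k<m. f (n + k) t) \<le> e" "(\<Sum>k<m. g (n + k) t) \<le> e" by auto
    thus "(\<Sum>k<m. (f (n + k) t + g (n + k) t) / 2) \<le> e"
      by (simp add: sum_divide_distrib[symmetric] sum.distrib)
  qed
qed

lemma inner_conv:
  assumes "x \<in> HA A" "y \<in> HA A"
  shows "conv_to A (\<lambda>k. c_mul A (c_star A (x k)) (y k)) (inner_A A x y)"
proof -
  have "\<exists>s. conv_to A (\<lambda>k. c_mul A (c_star A (x k)) (y k)) s"
  proof (rule conv_ex[OF _ _ utail_add[OF assms[unfolded HA_iff]]])
    show "eventually (\<lambda>t. \<forall>k. cmod (ev (c_mul A (c_star A (x k)) (y k)) t)
            \<le> ((cmod (ev (x k) t))\<^sup>2 + (cmod (ev (y k) t))\<^sup>2) / 2) F"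
    proof (rule eventually_mono[OF ev_inner_terms'[of x y]], intro allI)
      fix t k
      assume "\<forall>k. ev (c_mul A (c_star A (x k)) (y k)) t = cnj (ev (x k) t) * ev (y k) t"
      hence e: "cmod (ev (c_mul A (c_star A (x k)) (y k)) t) = cmod (ev (x k) t) * cmod (ev (y k) t)"
        by (simp add: norm_mult)
      have "0 \<le> (cmod (ev (x k) t) - cmod (ev (y k) t))\<^sup>2" by simp
      thus "cmod (ev (c_mul A (c_star A (x k)) (y k)) t) \<le> ((cmod (ev (x k) t))\<^sup>2 + (cmod (ev (y k) t))\<^sup>2) / 2"
        unfolding e by (simp add: power2_eq_square algebra_simps)
    qed
  qed simp
  then obtain s where s: "conv_to A (\<lambda>k. c_mul A (c_star A (x k)) (y k)) s" by blast
  have "inner_A A x y = s" unfolding inner_A_def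
  proof (rule the_equality)
    fix s' assume "conv_to A (\<lambda>k. c_mul A (c_star A (x k)) (y k)) s'"
    thus "s' = s" using conv_unique s by blast
  qed (rule s)
  thus ?thesis using s by simp
qed

lemma inner_ev:
  assumes "x \<in> HA A" "y \<in> HA A"
  shows "eventually (\<lambda>t. (\<lambda>k. cnj (ev (x k) t) * ev (y k) t) sums ev (inner_A A x y) t) F"
  by (rule ev2[OF conv_ev[OF inner_conv[OF assms]] ev_inner_terms'[of x y]]) simp

lemma hnorm_sq: "(hnorm A x)\<^sup>2 = c_norm A (inner_A A x x)"
  unfolding hnorm_def using cnorm_nonneg[of "inner_A A x x"] by simp

lemma hnorm_nonneg: "0 \<le> hnorm A x"
  unfolding hnorm_def using cnorm_nonneg[of "inner_A A x x"] by simp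

lemma HA_pointwise:
  assumes "x \<in> HA A"
  shows "eventually (\<lambda>t. (\<lambda>k. (cmod (ev (x k) t))\<^sup>2) sums Re (ev (inner_A A x x) t)
      \<and> ev (inner_A A x x) t = of_real (Re (ev (inner_A A x x) t))) F"
proof (rule eventually_mono[OF inner_ev[OF assms assms]])
  fix t assume S: "(\<lambda>k. cnj (ev (x k) t) * ev (x k) t) sums ev (inner_A A x x) t"
  have e: "cnj (ev (x k) t) * ev (x k) t = of_real ((cmod (ev (x k) t))\<^sup>2)" for k
    by (rule cnj_mult_self)
  have S': "(\<lambda>k. of_real ((cmod (ev (x k) t))\<^sup>2)) sums ev (inner_A A x x) t" using S unfolding e .
  have S2: "(\<lambda>k. (cmod (ev (x k) t))\<^sup>2) sums Re (ev (inner_A A x x) t)"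
    using sums_Re[OF S'] by simp
  have "Im (ev (inner_A A x x) t) = 0" using sums_Im[OF S'] sums_unique by fastforce
  thus "(\<lambda>k. (cmod (ev (x k) t))\<^sup>2) sums Re (ev (inner_A A x x) t)
      \<and> ev (inner_A A x x) t = of_real (Re (ev (inner_A A x x) t))" using S2 complex_eq_iff by auto
qed

lemma hnorm_bound:
  assumes "x \<in> HA A"
  shows "eventually (\<lambda>t. summable (\<lambda>k. (cmod (ev (x k) t))\<^sup>2) \<and> (\<Sum>k. (cmod (ev (x k) t))\<^sup>2) \<le> (hnorm A x)\<^sup>2
     \<and> (\<forall>m. (\<Sum>k<m. (cmod (ev (x k) t))\<^sup>2) \<le> (hnorm A x)\<^sup>2)) F"
proof (rule ev2[OF HA_pointwise[OF assms] norm_bound[of "inner_A A x x"]])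
  fix t
  assume H: "(\<lambda>k. (cmod (ev (x k) t))\<^sup>2) sums Re (ev (inner_A A x x) t) \<and>
       ev (inner_A A x x) t = of_real (Re (ev (inner_A A x x) t))"
    and B: "cmod (ev (inner_A A x x) t) \<le> c_norm A (inner_A A x x)"
  have sm: "summable (\<lambda>k. (cmod (ev (x k) t))\<^sup>2)" using H sums_summable by blast
  have su: "(\<Sum>k. (cmod (ev (x k) t))\<^sup>2) = Re (ev (inner_A A x x) t)" using H sums_unique by metis
  have "Re (ev (inner_A A x x) t) \<le> cmod (ev (inner_A A x x) t)" by (rule complex_Re_le_cmod)
  hence le: "(\<Sum>k. (cmod (ev (x k) t))\<^sup>2) \<le> (hnorm A x)\<^sup>2" using B su hnorm_sq by simp
  have "(\<Sum>k<m. (cmod (ev (x k) t))\<^sup>2) \<le> (hnorm A x)\<^sup>2" for m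
    using sum_le_suminf[OF sm, of "{..<m}"] le by simp
  thus "summable (\<lambda>k. (cmod (ev (x k) t))\<^sup>2) \<and> (\<Sum>k. (cmod (ev (x k) t))\<^sup>2) \<le> (hnorm A x)\<^sup>2
     \<and> (\<forall>m. (\<Sum>k<m. (cmod (ev (x k) t))\<^sup>2) \<le> (hnorm A x)\<^sup>2)" using sm le by blast
qed

lemma hnorm_le:
  assumes "x \<in> HA A" "0 \<le> B" and E: "eventually (\<lambda>t. \<forall>m. (\<Sum>k<m. (cmod (ev (x k) t))\<^sup>2) \<le> B) F"
  shows "(hnorm A x)\<^sup>2 \<le> B"
proof -
  have "eventually (\<lambda>t. cmod (ev (inner_A A x x) t) \<le> B) F"
  proof (rule ev2[OF HA_pointwise[OF assms(1)] E])
    fix t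
    assume H: "(\<lambda>k. (cmod (ev (x k) t))\<^sup>2) sums Re (ev (inner_A A x x) t) \<and>
       ev (inner_A A x x) t = of_real (Re (ev (inner_A A x x) t))"
      and P: "\<forall>m. (\<Sum>k<m. (cmod (ev (x k) t))\<^sup>2) \<le> B"
    have sm: "summable (\<lambda>k. (cmod (ev (x k) t))\<^sup>2)" using H sums_summable by blast
    have su: "(\<Sum>k. (cmod (ev (x k) t))\<^sup>2) = Re (ev (inner_A A x x) t)" using H sums_unique by metis
    have "(\<Sum>k. (cmod (ev (x k) t))\<^sup>2) \<le> B" by (rule suminf_le_const[OF sm]) (use P in auto)
    moreover have "0 \<le> (\<Sum>k. (cmod (ev (x k) t))\<^sup>2)" by (rule suminf_nonneg[OF sm]) simp
    moreover have "ev (inner_A A x x) t = of_real (\<Sum>k. (cmod (ev (x k) t))\<^sup>2)" using H su by simp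
    ultimately show "cmod (ev (inner_A A x x) t) \<le> B" by simp
  qed
  thus ?thesis unfolding hnorm_sq using norm_le_iff[OF assms(2)] by blast
qed

end


lemma YT: "a * b = 1 \<Longrightarrow> Yp (\<lambda>k. (if k = 0 then 0 else X (k - 1)) - a * X k) b k = X k"
proof (induction k)
  case 0 then show ?case by (simp add: Yp.simps algebra_simps)
next
  case (Suc k)
  have "Yp (\<lambda>k. (if k = 0 then 0 else X (k - 1)) - a * X k) b (Suc k)
      = b * (X k - (X k - a * X (Suc k)))" using Suc by (simp add: Yp.simps)
  also have "\<dots> = (a * b) * X (Suc k)" by (simp add: algebra_simps)
  finally show ?case using Suc.prems by simp
qed

lemma TY: "a * b = 1 \<Longrightarrow> (if k = 0 then 0 else Yp X b (k - 1)) - a * Yp X b k = X k"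
proof (cases k)
  case 0 assume "a * b = 1" then show ?thesis using 0
    by (simp add: Yp.simps)
next
  case (Suc j) assume ab: "a * b = 1"
  have "Yp X b j - a * (b * (Yp X b j - X (Suc j))) = Yp X b j - (a * b) * (Yp X b j - X (Suc j))"
    by (simp add: algebra_simps)
  then show ?thesis using Suc ab by (simp add: Yp.simps)
qed

lemma Yp_add: "Yp (\<lambda>k. X k + Z k) b k = Yp X b k + Yp Z b k"
  by (induction k) (simp_all add: Yp.simps algebra_simps)

lemma Yp_mult: "Yp (\<lambda>k. X k * c) b k = Yp X b k * c"
  by (induction k) (simp_all add: Yp.simps algebra_simps)

lemma ps_pw:
  fixes X :: "nat \<Rightarrow> complex"
  assumes H: "\<And>k. (if k = 0 then 0 else X (k - 1)) - a * X k = 0"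
  shows "X k = 0"
proof (cases "a = 0")
  case True
  from H[of "Suc k"] True show ?thesis by simp
next
  case False
  show ?thesis
  proof (induction k)
    case 0 from H[of 0] False show ?case by simp
  next
    case (Suc k) from H[of "Suc k"] Suc False show ?case by simp
  qed
qed

context
  fixes q :: real and b :: complex
  assumes q0: "0 \<le> q" and q1: "q < 1" and bq: "cmod b \<le> q"
begin

lemma W_partial:
  assumes "\<And>k. cmod (V k) \<le> B"
  shows "cmod (- (\<Sum>i<n. cnj b ^ Suc i * V (j + i)) - Wf V b j) \<le> B * q ^ n / (1 - q)"
proof -
  let ?f = "\<lambda>i. cnj b ^ Suc i * V (j + i)"
  have s: "summable ?f" by (rule W_summable[OF q0 q1 bq assms])
  have B0: "0 \<le> B" using assms[of 0] norm_ge_zero order_trans by blast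
  have nb: "norm (?f (i + n)) \<le> (B * q ^ n) * q ^ i" for i
  proof -
    have "cmod (?f (i + n)) = cmod b ^ Suc (i + n) * cmod (V (j + (i + n)))" by (simp add: norm_mult norm_power)
    also have "\<dots> \<le> q ^ (i + n) * B"
    proof (rule mult_mono)
      have "cmod b ^ Suc (i + n) \<le> cmod b ^ (i + n)" using bq q1 by (simp add: power_decreasing mult_left_le_one_le)
      also have "\<dots> \<le> q ^ (i + n)" using bq by (simp add: power_mono)
      finally show "cmod b ^ Suc (i + n) \<le> q ^ (i + n)" .
    qed (use assms q0 in auto)
    finally show ?thesis by (simp add: power_add algebra_simps)
  qed
  have gs: "summable (\<lambda>i. (B * q ^ n) * q ^ i)" using q0 q1 by (intro summable_mult summable_geometric) simp
  have sn: "summable (\<lambda>i. norm (?f (i + n)))"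
    by (rule summable_comparison_test'[OF gs]) (use nb in auto)
  have "Wf V b j = - ((\<Sum>i. ?f (i + n)) + (\<Sum>i<n. ?f i))"
    unfolding Wf_def using suminf_split_initial_segment[OF s, of n] by simp
  hence "- (\<Sum>i<n. ?f i) - Wf V b j = (\<Sum>i. ?f (i + n))" by simp
  hence "cmod (- (\<Sum>i<n. ?f i) - Wf V b j) = norm (\<Sum>i. ?f (i + n))" by simp
  also have "\<dots> \<le> (\<Sum>i. norm (?f (i + n)))" by (rule summable_norm[OF sn])
  also have "\<dots> \<le> (\<Sum>i. (B * q ^ n) * q ^ i)" by (rule suminf_le[OF nb sn gs])
  also have "\<dots> = (B * q ^ n) * (1 / (1 - q))" using q0 q1 by (subst suminf_mult) (auto simp: suminf_geometric)
  finally show ?thesis by simp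
qed

end


context falg begin

lemma T_ev: "eventually (\<lambda>t. \<forall>k. ev (minus_scalar A (shift A) \<alpha> x k) t
    = (if k = 0 then 0 else ev (x (k - 1)) t) - ev \<alpha> t * ev (x k) t) F"
  for x :: "nat \<Rightarrow> 'a"
proof (rule cnt)
  fix k
  show "eventually (\<lambda>t. ev (minus_scalar A (shift A) \<alpha> x k) t
    = (if k = 0 then 0 else ev (x (k - 1)) t) - ev \<alpha> t * ev (x k) t) F"
  proof (cases "k = 0")
    case True
    show ?thesis unfolding minus_scalar_def shift_def using True
      by (intro ev4[OF ev_add[of "c_zero A" "c_neg A (c_mul A \<alpha> (x k))"] ev_zero ev_neg[of "c_mul A \<alpha> (x k)"] ev_mul[of \<alpha> "x k"]]) simp
  next
    case False
    show ?thesis unfolding minus_scalar_def shift_def using False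
      by (intro ev3[OF ev_add[of "x (k - 1)" "c_neg A (c_mul A \<alpha> (x k))"] ev_neg[of "c_mul A \<alpha> (x k)"] ev_mul[of \<alpha> "x k"]]) simp
  qed
qed

lemma point_spectrum_empty: "A_point_spectrum A (shift A) = {}"
proof (rule ccontr)
  assume "A_point_spectrum A (shift A) \<noteq> {}"
  then obtain \<alpha> x where x: "x \<in> HA A" "x \<noteq> vzero A" "minus_scalar A (shift A) \<alpha> x = vzero A"
    unfolding A_point_spectrum_def by blast
  have E: "eventually (\<lambda>t. \<forall>k. ev (x k) t = ev (c_zero A) t) F"
  proof (rule ev2[OF T_ev[of \<alpha> x] ev_zero], intro allI)
    fix t k
    assume H: "\<forall>k. ev (minus_scalar A (shift A) \<alpha> x k) t = (if k = 0 then 0 else ev (x (k - 1)) t) - ev \<alpha> t * ev (x k) t"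
      and Z: "ev (c_zero A) t = 0"
    have "(if k = 0 then 0 else ev (x (k - 1)) t) - ev \<alpha> t * ev (x k) t = 0" for k
      using H[rule_format, of k] x(3) Z unfolding vzero_def by simp
    hence "ev (x k) t = 0" by (rule ps_pw)
    thus "ev (x k) t = ev (c_zero A) t" using Z by simp
  qed
  have "x k = c_zero A" for k by (rule ev_eq, rule eventually_mono[OF E]) blast
  hence "x = vzero A" unfolding vzero_def by auto
  with x(2) show False by simp
qed

end


primrec Gr :: "'a calg \<Rightarrow> 'a \<Rightarrow> (nat \<Rightarrow> 'a) \<Rightarrow> nat \<Rightarrow> 'a" where
  "Gr A \<beta> x 0 = c_mul A \<beta> (c_neg A (x 0))"
| "Gr A \<beta> x (Suc k) = c_mul A \<beta> (c_add A (Gr A \<beta> x k) (c_neg A (x (Suc k))))"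

lemma qpow_small:
  fixes q C e :: real
  assumes "0 \<le> q" "q < 1" "e > 0"
  shows "\<exists>N. \<forall>n\<ge>N. C * q ^ n \<le> e"
proof -
  have "(\<lambda>n. C * q ^ n) \<longlonglongrightarrow> C * 0" using assms by (intro tendsto_mult tendsto_const LIMSEQ_power_zero) simp
  from LIMSEQ_D[OF this[simplified] \<open>e > 0\<close>] obtain N where "\<And>n. n \<ge> N \<Longrightarrow> norm (C * q ^ n) < e" by auto
  thus ?thesis by (intro exI[of _ N]) (auto intro: less_imp_le order_trans[OF abs_ge_self])
qed

context falg begin

definition Gadj :: "'a \<Rightarrow> (nat \<Rightarrow> 'a) \<Rightarrow> nat \<Rightarrow> 'a" where
  "Gadj \<beta> v j = (SOME a. eventually (\<lambda>t. ev a t = Wf (\<lambda>k. ev (v k) t) (ev \<beta> t) j) F)"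

lemma pw_bound:
  assumes "v \<in> HA A"
  shows "eventually (\<lambda>t. \<forall>k. cmod (ev (v k) t) \<le> hnorm A v) F"
proof (rule eventually_mono[OF hnorm_bound[OF assms]], intro allI)
  fix t k
  assume "summable (\<lambda>k. (cmod (ev (v k) t))\<^sup>2) \<and> (\<Sum>k. (cmod (ev (v k) t))\<^sup>2) \<le> (hnorm A v)\<^sup>2 \<and>
       (\<forall>m. (\<Sum>k<m. (cmod (ev (v k) t))\<^sup>2) \<le> (hnorm A v)\<^sup>2)"
  hence "(\<Sum>k<Suc k. (cmod (ev (v k) t))\<^sup>2) \<le> (hnorm A v)\<^sup>2" by blast
  moreover have "(cmod (ev (v k) t))\<^sup>2 \<le> (\<Sum>k<Suc k. (cmod (ev (v k) t))\<^sup>2)"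
    by (rule member_le_sum) auto
  ultimately have "(cmod (ev (v k) t))\<^sup>2 \<le> (hnorm A v)\<^sup>2" by linarith
  thus "cmod (ev (v k) t) \<le> hnorm A v" using hnorm_nonneg by (rule power2_le_imp_le)
qed

end

locale falg_inv = falg A F ev for A :: "'a calg" and F and ev +
  fixes \<alpha> \<beta> :: 'a and q :: real
  assumes q0: "0 \<le> q" and q1: "q < 1"
    and AB: "eventually (\<lambda>t. ev \<alpha> t * ev \<beta> t = 1 \<and> cmod (ev \<beta> t) \<le> q) F"
begin

lemma G_ev: "eventually (\<lambda>t. \<forall>k. ev (Gr A \<beta> x k) t = Yp (\<lambda>k. ev (x k) t) (ev \<beta> t) k) F"
proof (rule cnt)
  fix k show "eventually (\<lambda>t. ev (Gr A \<beta> x k) t = Yp (\<lambda>k. ev (x k) t) (ev \<beta> t) k) F"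
  proof (induction k)
    case 0
    show ?case by (rule ev2[OF ev_mul[of \<beta> "c_neg A (x 0)"] ev_neg[of "x 0"]]) (simp add: Yp.simps)
  next
    case (Suc k)
    show ?case
      by (rule ev4[OF Suc ev_mul[of \<beta> "c_add A (Gr A \<beta> x k) (c_neg A (x (Suc k)))"]
            ev_add[of "Gr A \<beta> x k" "c_neg A (x (Suc k))"] ev_neg[of "x (Suc k)"]]) (simp add: Yp.simps)
  qed
qed

lemma TG: "minus_scalar A (shift A) \<alpha> (Gr A \<beta> x) = x"
proof
  fix k
  show "minus_scalar A (shift A) \<alpha> (Gr A \<beta> x) k = x k"
  proof (rule ev_eq, rule ev3[OF T_ev[of \<alpha> "Gr A \<beta> x"] G_ev[of x] AB])
    fix t
    assume T: "\<forall>k. ev (minus_scalar A (shift A) \<alpha> (Gr A \<beta> x) k) t =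
           (if k = 0 then 0 else ev (Gr A \<beta> x (k - 1)) t) - ev \<alpha> t * ev (Gr A \<beta> x k) t"
      and G: "\<forall>k. ev (Gr A \<beta> x k) t = Yp (\<lambda>k. ev (x k) t) (ev \<beta> t) k"
      and ab: "ev \<alpha> t * ev \<beta> t = 1 \<and> cmod (ev \<beta> t) \<le> q"
    have "ev (minus_scalar A (shift A) \<alpha> (Gr A \<beta> x) k) t
      = (if k = 0 then 0 else Yp (\<lambda>k. ev (x k) t) (ev \<beta> t) (k - 1)) - ev \<alpha> t * Yp (\<lambda>k. ev (x k) t) (ev \<beta> t) k"
      using T G by simp
    also have "\<dots> = ev (x k) t" using TY[of "ev \<alpha> t" "ev \<beta> t" k "\<lambda>k. ev (x k) t"] ab by simp
    finally show "ev (minus_scalar A (shift A) \<alpha> (Gr A \<beta> x) k) t = ev (x k) t" .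
  qed
qed

lemma GT: "Gr A \<beta> (minus_scalar A (shift A) \<alpha> x) = x"
proof
  fix k
  show "Gr A \<beta> (minus_scalar A (shift A) \<alpha> x) k = x k"
  proof (rule ev_eq, rule ev3[OF T_ev[of \<alpha> x] G_ev[of "minus_scalar A (shift A) \<alpha> x"] AB])
    fix t
    assume T: "\<forall>k. ev (minus_scalar A (shift A) \<alpha> x k) t =
           (if k = 0 then 0 else ev (x (k - 1)) t) - ev \<alpha> t * ev (x k) t"
      and G: "\<forall>k. ev (Gr A \<beta> (minus_scalar A (shift A) \<alpha> x) k) t
           = Yp (\<lambda>k. ev (minus_scalar A (shift A) \<alpha> x k) t) (ev \<beta> t) k"
      and ab: "ev \<alpha> t * ev \<beta> t = 1 \<and> cmod (ev \<beta> t) \<le> q"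
    have fe: "(\<lambda>k. ev (minus_scalar A (shift A) \<alpha> x k) t) = (\<lambda>k. (if k = 0 then 0 else ev (x (k - 1)) t) - ev \<alpha> t * ev (x k) t)"
      using T by auto
    show "ev (Gr A \<beta> (minus_scalar A (shift A) \<alpha> x) k) t = ev (x k) t"
      unfolding G[rule_format] fe using YT[of "ev \<alpha> t" "ev \<beta> t" "\<lambda>k. ev (x k) t" k] ab by simp
  qed
qed

lemma G_add: "Gr A \<beta> (vadd A x y) = vadd A (Gr A \<beta> x) (Gr A \<beta> y)"
proof
  fix k
  have VA: "eventually (\<lambda>t. \<forall>k. ev (vadd A x y k) t = ev (x k) t + ev (y k) t) F"
    unfolding vadd_def by (rule cnt) (rule ev_add)
  show "Gr A \<beta> (vadd A x y) k = vadd A (Gr A \<beta> x) (Gr A \<beta> y) k"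
  proof (rule ev_eq, rule ev4[OF VA G_ev[of "vadd A x y"] G_ev[of x] eventually_conj[OF G_ev[of y] ev_add[of "Gr A \<beta> x k" "Gr A \<beta> y k"]]])
    fix t
    assume V: "\<forall>k. ev (vadd A x y k) t = ev (x k) t + ev (y k) t"
      and G1: "\<forall>k. ev (Gr A \<beta> (vadd A x y) k) t = Yp (\<lambda>k. ev (vadd A x y k) t) (ev \<beta> t) k"
      and G2: "\<forall>k. ev (Gr A \<beta> x k) t = Yp (\<lambda>k. ev (x k) t) (ev \<beta> t) k"
      and G3: "(\<forall>k. ev (Gr A \<beta> y k) t = Yp (\<lambda>k. ev (y k) t) (ev \<beta> t) k) \<and>
          ev (c_add A (Gr A \<beta> x k) (Gr A \<beta> y k)) t = ev (Gr A \<beta> x k) t + ev (Gr A \<beta> y k) t"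
    have fe: "(\<lambda>k. ev (vadd A x y k) t) = (\<lambda>k. ev (x k) t + ev (y k) t)" using V by auto
    have r: "vadd A (Gr A \<beta> x) (Gr A \<beta> y) k = c_add A (Gr A \<beta> x k) (Gr A \<beta> y k)" unfolding vadd_def ..
    show "ev (Gr A \<beta> (vadd A x y) k) t = ev (vadd A (Gr A \<beta> x) (Gr A \<beta> y) k) t"
      unfolding r using G1 G2 G3 fe Yp_add by simp
  qed
qed

lemma G_ract: "Gr A \<beta> (ract A x c) = ract A (Gr A \<beta> x) c"
proof
  fix k
  have VA: "eventually (\<lambda>t. \<forall>k. ev (ract A x c k) t = ev (x k) t * ev c t) F"
    unfolding ract_def by (rule cnt) (rule ev_mul)
  show "Gr A \<beta> (ract A x c) k = ract A (Gr A \<beta> x) c k"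
  proof (rule ev_eq, rule ev4[OF VA G_ev[of "ract A x c"] G_ev[of x] ev_mul[of "Gr A \<beta> x k" c]])
    fix t
    assume V: "\<forall>k. ev (ract A x c k) t = ev (x k) t * ev c t"
      and G1: "\<forall>k. ev (Gr A \<beta> (ract A x c) k) t = Yp (\<lambda>k. ev (ract A x c k) t) (ev \<beta> t) k"
      and G2: "\<forall>k. ev (Gr A \<beta> x k) t = Yp (\<lambda>k. ev (x k) t) (ev \<beta> t) k"
      and G3: "ev (c_mul A (Gr A \<beta> x k) c) t = ev (Gr A \<beta> x k) t * ev c t"
    have fe: "(\<lambda>k. ev (ract A x c k) t) = (\<lambda>k. ev (x k) t * ev c t)" using V by auto
    have r: "ract A (Gr A \<beta> x) c k = c_mul A (Gr A \<beta> x k) c" unfolding ract_def ..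
    show "ev (Gr A \<beta> (ract A x c) k) t = ev (ract A (Gr A \<beta> x) c k) t"
      unfolding r using G1 G2 G3 fe Yp_mult by simp
  qed
qed

lemma Gadj_ev:
  assumes v: "v \<in> HA A"
  shows "eventually (\<lambda>t. \<forall>j. ev (Gadj \<beta> v j) t = Wf (\<lambda>k. ev (v k) t) (ev \<beta> t) j) F"
proof (rule cnt)
  fix j
  let ?W = "\<lambda>t. Wf (\<lambda>k. ev (v k) t) (ev \<beta> t) j"
  let ?f = "\<lambda>n t. - (\<Sum>i<n. cnj (ev \<beta> t) ^ Suc i * ev (v (j + i)) t)"
  have "rep ?W"
  proof (rule rep_complete[of ?f])
    fix n show "rep (?f n)"
      by (intro rep_neg rep_sum rep_mul rep_power rep_cnj rep_ev)
  next
    fix e :: real assume "e > 0"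
    obtain N where N: "\<forall>n\<ge>N. hnorm A v / (1 - q) * q ^ n \<le> e" using qpow_small[OF q0 q1 \<open>e > 0\<close>] by blast
    show "\<exists>N. \<forall>n\<ge>N. eventually (\<lambda>t. cmod (?f n t - ?W t) \<le> e) F"
    proof (intro exI[of _ N] allI impI, rule ev2[OF AB pw_bound[OF v]])
      fix n t assume "N \<le> n" and ab: "ev \<alpha> t * ev \<beta> t = 1 \<and> cmod (ev \<beta> t) \<le> q"
        and B: "\<forall>k. cmod (ev (v k) t) \<le> hnorm A v"
      have "cmod (?f n t - ?W t) \<le> hnorm A v * q ^ n / (1 - q)"
        by (rule W_partial[OF q0 q1]) (use ab B in auto)
      also have "\<dots> \<le> e" using N \<open>N \<le> n\<close> by (simp add: field_simps)
      finally show "cmod (?f n t - ?W t) \<le> e" .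
    qed
  qed
  hence "\<exists>a. eventually (\<lambda>t. ev a t = ?W t) F" unfolding rep_def .
  hence "eventually (\<lambda>t. ev (Gadj \<beta> v j) t = ?W t) F" unfolding Gadj_def by (rule someI_ex)
  thus "eventually (\<lambda>t. ev (Gadj \<beta> v j) t = Wf (\<lambda>k. ev (v k) t) (ev \<beta> t) j) F" .
qed

end


context falg begin

lemma utail_cong:
  assumes "eventually (\<lambda>t. \<forall>k. h k t = h' k t) F" "utail h"
  shows "utail h'"
  unfolding utail_def
proof (intro allI impI)
  fix e :: real assume "e > 0"
  then obtain N where N: "eventually (\<lambda>t. \<forall>n\<ge>N. \<forall>m. (\<Sum>k<m. h (n + k) t) \<le> e) F"
    using assms(2) unfolding utail_def by blast
  show "\<exists>N. eventually (\<lambda>t. \<forall>n\<ge>N. \<forall>m. (\<Sum>k<m. h' (n + k) t) \<le> e) F"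
    by (rule exI[of _ N], rule ev2[OF assms(1) N]) simp
qed

lemma l2_tendsto: "summable (\<lambda>k. (cmod (V k))\<^sup>2) \<Longrightarrow> V \<longlonglongrightarrow> 0"
proof -
  assume "summable (\<lambda>k. (cmod (V k))\<^sup>2)"
  hence "(\<lambda>k. (cmod (V k))\<^sup>2) \<longlonglongrightarrow> 0" by (rule summable_LIMSEQ_zero)
  hence "(\<lambda>k. sqrt ((cmod (V k))\<^sup>2)) \<longlonglongrightarrow> sqrt 0" by (rule tendsto_real_sqrt)
  hence "(\<lambda>k. norm (V k)) \<longlonglongrightarrow> 0" by simp
  thus "V \<longlonglongrightarrow> 0" by (rule tendsto_norm_zero_cancel)
qed

end

context falg_inv begin

lemma G_HA:
  assumes x: "x \<in> HA A"
  shows "Gr A \<beta> x \<in> HA A"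
proof -
  define M where "M = q\<^sup>2 / (1 - q)"
  have M0: "0 \<le> M" unfolding M_def using q1 by simp
  define H where "H = (hnorm A x)\<^sup>2"
  define P where "P = M * H / (1 - q)"
  have UY: "utail (\<lambda>k t. (cmod (Yp (\<lambda>k. ev (x k) t) (ev \<beta> t) k))\<^sup>2)"
    unfolding utail_def
  proof (intro allI impI)
    fix e :: real assume "e > 0"
    define e' where "e' = e * (1 - q) / (1 + 2 * M)"
    have e'0: "e' > 0" unfolding e'_def using \<open>e > 0\<close> q1 M0 by simp
    obtain J where J: "eventually (\<lambda>t. \<forall>n\<ge>J. \<forall>m. (\<Sum>k<m. (cmod (ev (x (n + k)) t))\<^sup>2) \<le> e') F"
      using x e'0 unfolding HA_iff utail_def by blast
    obtain i where i: "P * q ^ i \<le> e'" using qpow_small[OF q0 q1 e'0, of P] by blast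
    show "\<exists>N. eventually (\<lambda>t. \<forall>n\<ge>N. \<forall>m. (\<Sum>k<m. (cmod (Yp (\<lambda>k. ev (x k) t) (ev \<beta> t) (n + k)))\<^sup>2) \<le> e) F"
    proof (rule exI[of _ "Suc (J + i)"], rule ev3[OF AB hnorm_bound[OF x] J], intro allI impI)
      fix t n m
      assume ab: "ev \<alpha> t * ev \<beta> t = 1 \<and> cmod (ev \<beta> t) \<le> q"
        and hb: "summable (\<lambda>k. (cmod (ev (x k) t))\<^sup>2) \<and> (\<Sum>k. (cmod (ev (x k) t))\<^sup>2) \<le> (hnorm A x)\<^sup>2 \<and>
          (\<forall>m. (\<Sum>k<m. (cmod (ev (x k) t))\<^sup>2) \<le> (hnorm A x)\<^sup>2)"
        and Jt: "\<forall>n\<ge>J. \<forall>m. (\<Sum>k<m. (cmod (ev (x (n + k)) t))\<^sup>2) \<le> e'"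
        and n: "Suc (J + i) \<le> n"
      let ?X = "\<lambda>k. ev (x k) t" and ?b = "ev \<beta> t"
      let ?p = "\<lambda>k. (cmod (Yp ?X ?b k))\<^sup>2"
      have bq: "cmod ?b \<le> q" using ab by blast
      obtain j where nj: "n = Suc j" using n by (cases n) auto
      define j0 where "j0 = j - i"
      have jj: "j = j0 + i" and j0J: "J \<le> Suc j0" using n nj unfolding j0_def by auto
      have p_j0: "?p j0 \<le> P"
      proof -
        have "(1 - q) * (\<Sum>k<Suc j0. ?p k) \<le> M * (\<Sum>k<Suc j0. (cmod (?X k))\<^sup>2)"
          unfolding M_def by (rule Yp_sum_bound[OF q0 q1 bq])
        also have "\<dots> \<le> M * H"
        proof -
          have "(\<Sum>k<Suc j0. (cmod (?X k))\<^sup>2) \<le> H" unfolding H_def using hb by blast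
          thus ?thesis using M0 by (intro mult_left_mono)
        qed
        finally have "(\<Sum>k<Suc j0. ?p k) \<le> M * H / (1 - q)" using q1 by (simp add: field_simps)
        moreover have "?p j0 \<le> (\<Sum>k<Suc j0. ?p k)" by (rule member_le_sum) auto
        ultimately show ?thesis unfolding P_def by linarith
      qed
      have p_j: "?p j \<le> e' + M * e'"
      proof -
        have "?p (j0 + i) \<le> q ^ i * ?p j0 + M * (\<Sum>k<i. (cmod (?X (Suc (j0 + k))))\<^sup>2)"
          unfolding M_def by (rule Yp_iter[OF q0 q1 bq])
        also have "\<dots> \<le> P * q ^ i + M * e'"
        proof (rule add_mono)
          have "q ^ i * ?p j0 \<le> q ^ i * P" using p_j0 q0 by (intro mult_left_mono) auto
          thus "q ^ i * ?p j0 \<le> P * q ^ i" by (simp only: mult.commute)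
          show "M * (\<Sum>k<i. (cmod (?X (Suc (j0 + k))))\<^sup>2) \<le> M * e'"
            using Jt[rule_format, OF j0J, of i] M0 by (intro mult_left_mono) auto
        qed
        finally show ?thesis using i jj by simp
      qed
      have "(1 - q) * (\<Sum>k<m. ?p (Suc (j + k))) \<le> q * ?p j + M * (\<Sum>k<m. (cmod (?X (Suc (j + k))))\<^sup>2)"
        unfolding M_def by (rule Yp_tail[OF q0 q1 bq])
      also have "\<dots> \<le> 1 * (e' + M * e') + M * e'"
      proof (rule add_mono)
        show "q * ?p j \<le> 1 * (e' + M * e')" using p_j q0 q1 by (intro mult_mono) auto
        have "(\<Sum>k<m. (cmod (?X (Suc (j + k))))\<^sup>2) \<le> e'" using Jt[rule_format, of n m] n nj by simp
        thus "M * (\<Sum>k<m. (cmod (?X (Suc (j + k))))\<^sup>2) \<le> M * e'" using M0 by (intro mult_left_mono)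
      qed
      also have "\<dots> = (1 + 2 * M) * e'" by (simp add: algebra_simps)
      also have "\<dots> = e * (1 - q)" unfolding e'_def using M0 by (simp add: divide_simps)
      finally have "(\<Sum>k<m. ?p (Suc (j + k))) \<le> e" using q1 by (simp add: mult.commute)
      thus "(\<Sum>k<m. ?p (n + k)) \<le> e" using nj by simp
    qed
  qed
  have "utail (\<lambda>k t. (cmod (ev (Gr A \<beta> x k) t))\<^sup>2)"
    by (rule utail_cong[OF _ UY], rule eventually_mono[OF G_ev[of x]]) simp
  thus ?thesis unfolding HA_iff .
qed

lemma G_bound:
  assumes x: "x \<in> HA A"
  shows "hnorm A (Gr A \<beta> x) \<le> sqrt (q\<^sup>2 / (1 - q) / (1 - q)) * hnorm A x"
proof -
  define M where "M = q\<^sup>2 / (1 - q)"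
  have M0: "0 \<le> M" unfolding M_def using q1 by simp
  have "(hnorm A (Gr A \<beta> x))\<^sup>2 \<le> M / (1 - q) * (hnorm A x)\<^sup>2"
  proof (rule hnorm_le[OF G_HA[OF x]])
    show "0 \<le> M / (1 - q) * (hnorm A x)\<^sup>2" using M0 q1 by simp
    show "eventually (\<lambda>t. \<forall>m. (\<Sum>k<m. (cmod (ev (Gr A \<beta> x k) t))\<^sup>2) \<le> M / (1 - q) * (hnorm A x)\<^sup>2) F"
    proof (rule ev3[OF AB hnorm_bound[OF x] G_ev[of x]], intro allI)
      fix t m
      assume ab: "ev \<alpha> t * ev \<beta> t = 1 \<and> cmod (ev \<beta> t) \<le> q"
        and hb: "summable (\<lambda>k. (cmod (ev (x k) t))\<^sup>2) \<and> (\<Sum>k. (cmod (ev (x k) t))\<^sup>2) \<le> (hnorm A x)\<^sup>2 \<and>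
          (\<forall>m. (\<Sum>k<m. (cmod (ev (x k) t))\<^sup>2) \<le> (hnorm A x)\<^sup>2)"
        and G: "\<forall>k. ev (Gr A \<beta> x k) t = Yp (\<lambda>k. ev (x k) t) (ev \<beta> t) k"
      have "(1 - q) * (\<Sum>k<m. (cmod (Yp (\<lambda>k. ev (x k) t) (ev \<beta> t) k))\<^sup>2) \<le> M * (\<Sum>k<m. (cmod (ev (x k) t))\<^sup>2)"
        unfolding M_def by (rule Yp_sum_bound[OF q0 q1]) (use ab in blast)
      also have "\<dots> \<le> M * (hnorm A x)\<^sup>2" using hb M0 by (intro mult_left_mono) auto
      finally show "(\<Sum>k<m. (cmod (ev (Gr A \<beta> x k) t))\<^sup>2) \<le> M / (1 - q) * (hnorm A x)\<^sup>2"
        using G q1 by (simp add: field_simps)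
    qed
  qed
  hence "sqrt ((hnorm A (Gr A \<beta> x))\<^sup>2) \<le> sqrt (M / (1 - q) * (hnorm A x)\<^sup>2)" by (rule real_sqrt_le_mono)
  moreover have "sqrt ((hnorm A (Gr A \<beta> x))\<^sup>2) = hnorm A (Gr A \<beta> x)"
    by (simp only: real_sqrt_abs abs_of_nonneg[OF hnorm_nonneg])
  moreover have "sqrt (M / (1 - q) * (hnorm A x)\<^sup>2) = sqrt (M / (1 - q)) * hnorm A x"
    by (simp only: real_sqrt_mult real_sqrt_abs abs_of_nonneg[OF hnorm_nonneg])
  ultimately show ?thesis unfolding M_def by simp
qed

lemma Gadj_HA:
  assumes v: "v \<in> HA A"
  shows "Gadj \<beta> v \<in> HA A"
proof -
  define M where "M = q\<^sup>2 / (1 - q)"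
  have M0: "0 \<le> M" unfolding M_def using q1 by simp
  have UW: "utail (\<lambda>k t. (cmod (Wf (\<lambda>k. ev (v k) t) (ev \<beta> t) k))\<^sup>2)"
    unfolding utail_def
  proof (intro allI impI)
    fix e :: real assume "e > 0"
    define e' where "e' = e * (1 - q) / (M + 1)"
    have e'0: "e' > 0" unfolding e'_def using \<open>e > 0\<close> q1 M0 by simp
    obtain N where N: "eventually (\<lambda>t. \<forall>n\<ge>N. \<forall>m. (\<Sum>k<m. (cmod (ev (v (n + k)) t))\<^sup>2) \<le> e') F"
      using v e'0 unfolding HA_iff utail_def by blast
    show "\<exists>N. eventually (\<lambda>t. \<forall>n\<ge>N. \<forall>m. (\<Sum>k<m. (cmod (Wf (\<lambda>k. ev (v k) t) (ev \<beta> t) (n + k)))\<^sup>2) \<le> e) F"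
    proof (rule exI[of _ N], rule ev4[OF AB hnorm_bound[OF v] N pw_bound[OF v]], intro allI impI)
      fix t n m
      assume ab: "ev \<alpha> t * ev \<beta> t = 1 \<and> cmod (ev \<beta> t) \<le> q"
        and hb: "summable (\<lambda>k. (cmod (ev (v k) t))\<^sup>2) \<and> (\<Sum>k. (cmod (ev (v k) t))\<^sup>2) \<le> (hnorm A v)\<^sup>2 \<and>
          (\<forall>m. (\<Sum>k<m. (cmod (ev (v k) t))\<^sup>2) \<le> (hnorm A v)\<^sup>2)"
        and Nt: "\<forall>n\<ge>N. \<forall>m. (\<Sum>k<m. (cmod (ev (v (n + k)) t))\<^sup>2) \<le> e'"
        and B: "\<forall>k. cmod (ev (v k) t) \<le> hnorm A v" and n: "N \<le> n"
      have "(1 - q) * (\<Sum>k<m. (cmod (Wf (\<lambda>k. ev (v k) t) (ev \<beta> t) (n + k)))\<^sup>2) \<le> M * e'"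
        unfolding M_def
      proof (rule W_tail[OF q0 q1])
        show "cmod (ev \<beta> t) \<le> q" using ab by blast
        show "\<And>k. cmod (ev (v k) t) \<le> hnorm A v" using B by blast
        show "(\<lambda>k. ev (v k) t) \<longlonglongrightarrow> 0" using hb by (intro l2_tendsto) blast
        show "\<And>m. (\<Sum>k<m. (cmod (ev (v (n + k)) t))\<^sup>2) \<le> e'" using Nt n by blast
      qed
      also have "\<dots> \<le> e * (1 - q)" unfolding e'_def using M0 q1 \<open>e > 0\<close> by (simp add: field_simps)
      finally show "(\<Sum>k<m. (cmod (Wf (\<lambda>k. ev (v k) t) (ev \<beta> t) (n + k)))\<^sup>2) \<le> e"
        using q1 by (simp add: mult.commute)
    qed
  qed
  have "utail (\<lambda>k t. (cmod (ev (Gadj \<beta> v k) t))\<^sup>2)"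
    by (rule utail_cong[OF _ UW], rule eventually_mono[OF Gadj_ev[OF v]]) simp
  thus ?thesis unfolding HA_iff .
qed

end


context falg_inv begin

lemma G_adjoint:
  assumes x: "x \<in> HA A" and v: "v \<in> HA A"
  shows "inner_A A (Gr A \<beta> x) v = inner_A A x (Gadj \<beta> v)"
proof (rule ev_eq)
  have E1: "eventually (\<lambda>t. ((\<lambda>k. cnj (ev (Gr A \<beta> x k) t) * ev (v k) t) sums ev (inner_A A (Gr A \<beta> x) v) t)
     \<and> ((\<lambda>k. cnj (ev (x k) t) * ev (Gadj \<beta> v k) t) sums ev (inner_A A x (Gadj \<beta> v)) t)
     \<and> (\<forall>k. ev (Gr A \<beta> x k) t = Yp (\<lambda>k. ev (x k) t) (ev \<beta> t) k)
     \<and> (\<forall>j. ev (Gadj \<beta> v j) t = Wf (\<lambda>k. ev (v k) t) (ev \<beta> t) j)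
     \<and> (ev \<alpha> t * ev \<beta> t = 1 \<and> cmod (ev \<beta> t) \<le> q)
     \<and> (\<forall>k. cmod (ev (v k) t) \<le> hnorm A v)) F"
    by (intro eventually_conj inner_ev G_HA Gadj_HA x v G_ev Gadj_ev AB pw_bound)
  have E2: "eventually (\<lambda>t. summable (\<lambda>k. (cmod (ev (x k) t))\<^sup>2) \<and> summable (\<lambda>k. (cmod (ev (v k) t))\<^sup>2)
     \<and> summable (\<lambda>k. (cmod (ev (Gr A \<beta> x k) t))\<^sup>2) \<and> summable (\<lambda>k. (cmod (ev (Gadj \<beta> v k) t))\<^sup>2)) F"
  proof -
    have sm: "eventually (\<lambda>t. summable (\<lambda>k. (cmod (ev (z k) t))\<^sup>2)) F" if "z \<in> HA A" for z
      by (rule eventually_mono[OF hnorm_bound[OF that]]) blast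
    show ?thesis by (intro eventually_conj sm G_HA Gadj_HA x v)
  qed
  show "eventually (\<lambda>t. ev (inner_A A (Gr A \<beta> x) v) t = ev (inner_A A x (Gadj \<beta> v)) t) F"
  proof (rule ev2[OF E1 E2])
    fix t
    assume H: "((\<lambda>k. cnj (ev (Gr A \<beta> x k) t) * ev (v k) t) sums ev (inner_A A (Gr A \<beta> x) v) t)
     \<and> ((\<lambda>k. cnj (ev (x k) t) * ev (Gadj \<beta> v k) t) sums ev (inner_A A x (Gadj \<beta> v)) t)
     \<and> (\<forall>k. ev (Gr A \<beta> x k) t = Yp (\<lambda>k. ev (x k) t) (ev \<beta> t) k)
     \<and> (\<forall>j. ev (Gadj \<beta> v j) t = Wf (\<lambda>k. ev (v k) t) (ev \<beta> t) j)
     \<and> (ev \<alpha> t * ev \<beta> t = 1 \<and> cmod (ev \<beta> t) \<le> q)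
     \<and> (\<forall>k. cmod (ev (v k) t) \<le> hnorm A v)"
    and S: "summable (\<lambda>k. (cmod (ev (x k) t))\<^sup>2) \<and> summable (\<lambda>k. (cmod (ev (v k) t))\<^sup>2)
     \<and> summable (\<lambda>k. (cmod (ev (Gr A \<beta> x k) t))\<^sup>2) \<and> summable (\<lambda>k. (cmod (ev (Gadj \<beta> v k) t))\<^sup>2)"
    define X where "X = (\<lambda>k. ev (x k) t)"
    define V where "V = (\<lambda>k. ev (v k) t)"
    define a where "a = ev \<alpha> t"
    define b where "b = ev \<beta> t"
    define Y where "Y = Yp X b"
    define W where "W = Wf V b"
    have ab: "a * b = 1" and bq: "cmod b \<le> q" using H unfolding a_def b_def by auto
    have GY: "(\<lambda>k. ev (Gr A \<beta> x k) t) = Y" using H unfolding Y_def X_def b_def by auto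
    have GW: "(\<lambda>k. ev (Gadj \<beta> v k) t) = W" using H unfolding W_def V_def b_def by auto
    have S1: "(\<lambda>k. cnj (Y k) * V k) sums ev (inner_A A (Gr A \<beta> x) v) t"
      unfolding GY[symmetric] V_def using H by blast
    have S2: "(\<lambda>k. cnj (X k) * W k) sums ev (inner_A A x (Gadj \<beta> v)) t"
      unfolding GW[symmetric] X_def using H by blast
    have VB: "\<And>k. cmod (V k) \<le> hnorm A v" using H unfolding V_def by blast
    have "(\<Sum>k. cnj (Y k) * V k) = (\<Sum>k. cnj (X k) * W k)"
    proof (rule adj_gen[where a = a])
      show "X 0 = - a * Y 0" unfolding Y_def using ab by (simp add: Yp.simps algebra_simps)
      show "X (Suc k) = Y k - a * Y (Suc k)" for k
      proof -
        have "a * Y (Suc k) = (a * b) * (Y k - X (Suc k))" unfolding Y_def by (simp add: Yp.simps algebra_simps)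
        thus ?thesis using ab by simp
      qed
      show "V k = W (Suc k) - cnj a * W k" for k
      proof -
        have "W k = cnj b * (W (Suc k) - V k)" unfolding W_def by (rule W_rec[OF q0 q1 bq VB])
        hence "cnj a * W k = cnj a * (cnj b * (W (Suc k) - V k))" by simp
        also have "\<dots> = cnj (a * b) * (W (Suc k) - V k)" by (simp add: mult.assoc)
        finally have "cnj a * W k = cnj (a * b) * (W (Suc k) - V k)" .
        thus ?thesis using ab by simp
      qed
      show "summable (\<lambda>k. (cmod (X k))\<^sup>2)" using S unfolding X_def by blast
      show "summable (\<lambda>k. (cmod (V k))\<^sup>2)" using S unfolding V_def by blast
      show "summable (\<lambda>k. (cmod (Y k))\<^sup>2)" unfolding GY[symmetric] using S by blast
      show "summable (\<lambda>k. (cmod (W k))\<^sup>2)" unfolding GW[symmetric] using S by blast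
    qed
    thus "ev (inner_A A (Gr A \<beta> x) v) t = ev (inner_A A x (Gadj \<beta> v)) t"
      using sums_unique[OF S1] sums_unique[OF S2] by simp
  qed
qed

lemma G_Ba: "Gr A \<beta> \<in> Ba A"
  unfolding Ba_def
proof (intro CollectI conjI ballI allI)
  show "\<And>x. x \<in> HA A \<Longrightarrow> Gr A \<beta> x \<in> HA A" by (rule G_HA)
  show "\<And>x y. Gr A \<beta> (vadd A x y) = vadd A (Gr A \<beta> x) (Gr A \<beta> y)" by (rule G_add)
  show "\<And>x a. Gr A \<beta> (ract A x a) = ract A (Gr A \<beta> x) a" by (rule G_ract)
  show "\<exists>C. \<forall>x\<in>HA A. hnorm A (Gr A \<beta> x) \<le> C * hnorm A x" using G_bound by blast
  show "\<exists>G. (\<forall>y\<in>HA A. G y \<in> HA A) \<and> (\<forall>x\<in>HA A. \<forall>y\<in>HA A. inner_A A (Gr A \<beta> x) y = inner_A A x (G y))"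
    using Gadj_HA G_adjoint by blast
qed

lemma inv_ok: "invertible_Ba A (minus_scalar A (shift A) \<alpha>)"
  unfolding invertible_Ba_def using G_Ba GT TG by blast

lemma not_in_spectrum: "\<alpha> \<notin> A_spectrum A (shift A)"
  unfolding A_spectrum_def using inv_ok by simp

end


lemma tele:
  fixes Z U :: "nat \<Rightarrow> complex"
  assumes ZU: "\<And>k. k < N \<Longrightarrow> Z k = (if k = 0 then 0 else U (k - 1)) - a * U k"
    and ZS: "\<And>k. Z (Suc k) = cnj a * Z k"
  shows "n < N \<Longrightarrow> (\<Sum>k<Suc n. cnj (Z k) * Z k) = - a * cnj (Z n) * U n"
proof (induction n)
  case 0
  have "Z 0 = - a * U 0" using ZU[of 0] 0 by simp
  then show ?case by (simp add: algebra_simps)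
next
  case (Suc n)
  have IH: "(\<Sum>k<Suc n. cnj (Z k) * Z k) = - a * cnj (Z n) * U n" using Suc by simp
  have z: "Z (Suc n) = U n - a * U (Suc n)" using ZU[of "Suc n"] Suc.prems by simp
  have c: "cnj (Z (Suc n)) = a * cnj (Z n)" using ZS[of n] by simp
  have "(\<Sum>k<Suc (Suc n). cnj (Z k) * Z k) = - a * cnj (Z n) * U n + cnj (Z (Suc n)) * Z (Suc n)"
    using IH by simp
  also have "\<dots> = - a * cnj (Z n) * U n + a * cnj (Z n) * (U n - a * U (Suc n))"
    unfolding c by (subst z) simp
  also have "\<dots> = - a * (a * cnj (Z n)) * U (Suc n)" by (simp add: algebra_simps)
  finally show ?case unfolding c .
qed

lemma gp_mult: "((s::real) - 1) * (\<Sum>k<N. s ^ k) = s ^ N - 1"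
  by (induction N) (simp_all add: algebra_simps)

lemma geo_ineq:
  fixes s eta :: real
  assumes "0 \<le> s" "s \<le> 1 + eta" "0 \<le> eta" "N \<ge> 1"
  shows "s ^ N \<le> (eta + 1 / real N) * (\<Sum>k<N. s ^ k)"
proof (cases "s \<ge> 1")
  case True
  have "(\<Sum>k<N. (1::real)) \<le> (\<Sum>k<N. s ^ k)" by (intro sum_mono) (use True in \<open>simp add: one_le_power\<close>)
  hence SN: "real N \<le> (\<Sum>k<N. s ^ k)" by simp
  have "s ^ N = 1 + (s - 1) * (\<Sum>k<N. s ^ k)" using gp_mult[of s N] by simp
  also have "\<dots> \<le> (1 / real N) * (\<Sum>k<N. s ^ k) + eta * (\<Sum>k<N. s ^ k)"
  proof (rule add_mono)
    show "1 \<le> 1 / real N * (\<Sum>k<N. s ^ k)" using SN assms(4) by (simp add: field_simps)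
    show "(s - 1) * (\<Sum>k<N. s ^ k) \<le> eta * (\<Sum>k<N. s ^ k)"
      using assms(2) SN by (intro mult_right_mono) auto
  qed
  finally show ?thesis by (simp add: algebra_simps)
next
  case False
  have "(\<Sum>k<N. s ^ N) \<le> (\<Sum>k<N. s ^ k)"
    by (intro sum_mono power_decreasing) (use False assms(1) in auto)
  hence SN: "real N * s ^ N \<le> (\<Sum>k<N. s ^ k)" by simp
  have S0: "0 \<le> (\<Sum>k<N. s ^ k)" using assms(1) by (intro sum_nonneg) simp
  have "s ^ N \<le> (1 / real N) * (\<Sum>k<N. s ^ k)" using SN assms(4) by (simp add: field_simps)
  also have "\<dots> \<le> (eta + 1 / real N) * (\<Sum>k<N. s ^ k)" using S0 assms(3) by (intro mult_right_mono) auto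
  finally show ?thesis .
qed

lemma P_bound:
  fixes f r S C Hz d :: real
  assumes "0 \<le> f" "0 \<le> S" "0 \<le> C" "0 \<le> Hz"
    and P1: "f\<^sup>2 * S \<le> f * r ^ N * (C * Hz)" and G: "(r ^ N)\<^sup>2 \<le> d * S" and "0 \<le> r" and d0: "0 \<le> d"
  shows "f\<^sup>2 * S \<le> d * C\<^sup>2 * Hz\<^sup>2"
proof (cases "f\<^sup>2 * S = 0")
  case True
  have "0 \<le> d * C\<^sup>2 * Hz\<^sup>2" using d0 by simp
  thus ?thesis using True by linarith
next
  case False
  hence Ppos: "0 < f\<^sup>2 * S" using assms(1,2) by (simp add: less_le)
  have "(f\<^sup>2 * S)\<^sup>2 \<le> (f * r ^ N * (C * Hz))\<^sup>2"
    using P1 Ppos by (intro power_mono) auto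
  also have "\<dots> = f\<^sup>2 * (r ^ N)\<^sup>2 * (C\<^sup>2 * Hz\<^sup>2)" by (simp add: power_mult_distrib)
  also have "\<dots> \<le> f\<^sup>2 * (d * S) * (C\<^sup>2 * Hz\<^sup>2)"
    using G by (intro mult_right_mono mult_left_mono) auto
  also have "\<dots> = (f\<^sup>2 * S) * (d * C\<^sup>2 * Hz\<^sup>2)" by (simp add: algebra_simps)
  finally have "(f\<^sup>2 * S) * (f\<^sup>2 * S) \<le> (f\<^sup>2 * S) * (d * C\<^sup>2 * Hz\<^sup>2)" by (simp add: power2_eq_square)
  thus ?thesis using Ppos by (rule mult_left_le_imp_le)
qed


primrec zr :: "'a calg \<Rightarrow> 'a \<Rightarrow> 'a \<Rightarrow> nat \<Rightarrow> 'a" where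
  "zr A \<phi> \<alpha> 0 = \<phi>"
| "zr A \<phi> \<alpha> (Suc k) = c_mul A (c_star A \<alpha>) (zr A \<phi> \<alpha> k)"

context falg begin

lemma zr_ev: "eventually (\<lambda>t. \<forall>k. ev (zr A \<phi> \<alpha> k) t = ev \<phi> t * cnj (ev \<alpha> t) ^ k) F"
proof (rule cnt)
  fix k show "eventually (\<lambda>t. ev (zr A \<phi> \<alpha> k) t = ev \<phi> t * cnj (ev \<alpha> t) ^ k) F"
  proof (induction k)
    case 0 show ?case by simp
  next
    case (Suc k)
    show ?case by (rule ev3[OF Suc ev_mul[of "c_star A \<alpha>" "zr A \<phi> \<alpha> k"] ev_star[of \<alpha>]]) simp
  qed
qed

lemma sum_trunc:
  fixes h :: "nat \<Rightarrow> real"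
  assumes "\<And>k. 0 \<le> h k"
  shows "(\<Sum>k<m. if k < N then h k else 0) \<le> (\<Sum>k<N. h k)"
proof -
  have "(\<Sum>k<m. if k < N then h k else 0) = (\<Sum>k\<in>{..<m} \<inter> {..<N}. h k)"
    by (simp add: sum.inter_restrict)
  also have "\<dots> \<le> (\<Sum>k<N. h k)" by (intro sum_mono2) (auto simp: assms)
  finally show ?thesis .
qed

lemma in_spectrum:
  assumes Phi: "\<And>c. c > 1 \<Longrightarrow> \<exists>\<phi>. \<not> eventually (\<lambda>t. ev \<phi> t = 0) F
                  \<and> eventually (\<lambda>t. ev \<phi> t \<noteq> 0 \<longrightarrow> cmod (ev \<alpha> t) \<le> c) F"
  shows "\<alpha> \<in> A_spectrum A (shift A)"
proof (rule ccontr)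
  let ?T = "minus_scalar A (shift A) \<alpha>"
  assume "\<alpha> \<notin> A_spectrum A (shift A)"
  hence "invertible_Ba A ?T" unfolding A_spectrum_def by simp
  then obtain G where GB: "G \<in> Ba A" and inv: "\<And>x. x \<in> HA A \<Longrightarrow> G (?T x) = x \<and> ?T (G x) = x"
    unfolding invertible_Ba_def by blast
  from GB have GHA: "\<And>x. x \<in> HA A \<Longrightarrow> G x \<in> HA A" unfolding Ba_def by blast
  from GB obtain C where C: "\<And>x. x \<in> HA A \<Longrightarrow> hnorm A (G x) \<le> C * hnorm A x" unfolding Ba_def by blast
  define C' where "C' = max C 1"
  have C'1: "1 \<le> C'" unfolding C'_def by simp
  have C'': "hnorm A (G x) \<le> C' * hnorm A x" if "x \<in> HA A" for x
  proof -
    have "C * hnorm A x \<le> C' * hnorm A x" unfolding C'_def using hnorm_nonneg[of x] by (intro mult_right_mono) auto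
    thus ?thesis using C[OF that] by linarith
  qed
  define N :: nat where "N = Suc (nat \<lceil>4 * C'\<^sup>2\<rceil>)"
  have N1: "N \<ge> 1" unfolding N_def by simp
  have NC: "4 * C'\<^sup>2 \<le> real N" unfolding N_def by linarith
  define eta where "eta = 1 / (4 * C'\<^sup>2)"
  have eta0: "0 \<le> eta" unfolding eta_def by simp
  define d where "d = eta + 1 / real N"
  have d0: "0 \<le> d" unfolding d_def using eta0 by simp
  have dC: "d * C'\<^sup>2 \<le> 1 / 2"
  proof -
    have Cp: "0 < C'\<^sup>2" using C'1 by simp
    have Np: "0 < real N" using N1 by simp
    have "0 < real N * (4 * C'\<^sup>2)" using Np Cp by simp
    hence "1 / real N \<le> 1 / (4 * C'\<^sup>2)" using NC by (intro divide_left_mono) auto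
    hence "d \<le> 2 * (1 / (4 * C'\<^sup>2))" unfolding d_def eta_def by simp
    hence "d * C'\<^sup>2 \<le> 2 * (1 / (4 * C'\<^sup>2)) * C'\<^sup>2" using Cp by (intro mult_right_mono) auto
    also have "\<dots> = 1 / 2" using Cp by (simp add: field_simps)
    finally show ?thesis .
  qed
  define c where "c = sqrt (1 + eta)"
  have c1: "c > 1" unfolding c_def eta_def using C'1 by simp
  have cc: "c\<^sup>2 = 1 + eta" unfolding c_def using eta0 by simp
  obtain \<phi> where phi0: "\<not> eventually (\<lambda>t. ev \<phi> t = 0) F"
    and phic: "eventually (\<lambda>t. ev \<phi> t \<noteq> 0 \<longrightarrow> cmod (ev \<alpha> t) \<le> c) F"
    using Phi[OF c1] by blast
  define z where "z = (\<lambda>k. if k < N then zr A \<phi> \<alpha> k else c_zero A)"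
  have Ez: "eventually (\<lambda>t. \<forall>k. ev (z k) t = (if k < N then ev \<phi> t * cnj (ev \<alpha> t) ^ k else 0)) F"
    by (rule ev2[OF zr_ev[of \<phi> \<alpha>] ev_zero]) (simp add: z_def)
  have zHA: "z \<in> HA A" unfolding HA_iff utail_def
  proof (intro allI impI exI[of _ N])
    fix e :: real assume "e > 0"
    show "eventually (\<lambda>t. \<forall>n\<ge>N. \<forall>m. (\<Sum>k<m. (cmod (ev (z (n + k)) t))\<^sup>2) \<le> e) F"
      by (rule eventually_mono[OF Ez]) (use \<open>e > 0\<close> in simp)
  qed
  define u where "u = G z"
  have uHA: "u \<in> HA A" unfolding u_def by (rule GHA[OF zHA])
  have Tu: "?T u = z" unfolding u_def using inv[OF zHA] by blast
  define Hz where "Hz = hnorm A z"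
  have Hz0: "0 \<le> Hz" unfolding Hz_def by (rule hnorm_nonneg)
  have hu: "hnorm A u \<le> C' * Hz" unfolding Hz_def u_def by (rule C''[OF zHA])
  have key: "eventually (\<lambda>t. \<forall>m. (\<Sum>k<m. (cmod (ev (z k) t))\<^sup>2) \<le> Hz\<^sup>2 / 2) F"
  proof (rule ev4[OF Ez T_ev[of \<alpha> u] pw_bound[OF uHA] phic], intro allI)
    fix t m
    assume Zt: "\<forall>k. ev (z k) t = (if k < N then ev \<phi> t * cnj (ev \<alpha> t) ^ k else 0)"
      and Tt: "\<forall>k. ev (?T u k) t = (if k = 0 then 0 else ev (u (k - 1)) t) - ev \<alpha> t * ev (u k) t"
      and Bt: "\<forall>k. cmod (ev (u k) t) \<le> hnorm A u"
      and Pt: "ev \<phi> t \<noteq> 0 \<longrightarrow> cmod (ev \<alpha> t) \<le> c"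
    define a where "a = ev \<alpha> t"
    define Zf where "Zf = (\<lambda>k. ev \<phi> t * cnj a ^ k)"
    define U where "U = (\<lambda>k. ev (u k) t)"
    define f where "f = cmod (ev \<phi> t)"
    define r where "r = cmod a"
    define S where "S = (\<Sum>k<N. (r\<^sup>2) ^ k)"
    have f0: "0 \<le> f" and r0: "0 \<le> r" unfolding f_def r_def by auto
    have S0: "0 \<le> S" unfolding S_def by (intro sum_nonneg) simp
    have ZU: "Zf k = (if k = 0 then 0 else U (k - 1)) - a * U k" if "k < N" for k
      using Tt[rule_format, of k] Zt[rule_format, of k] that unfolding Tu Zf_def U_def a_def by simp
    have ZS: "Zf (Suc k) = cnj a * Zf k" for k unfolding Zf_def by (simp add: algebra_simps)
    have NN: "N - 1 < N" using N1 by simp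
    have tel: "(\<Sum>k<Suc (N - 1). cnj (Zf k) * Zf k) = - a * cnj (Zf (N - 1)) * U (N - 1)"
      by (rule tele[OF ZU ZS NN]) auto
    have normZ: "(cmod (Zf k))\<^sup>2 = f\<^sup>2 * (r\<^sup>2) ^ k" for k
      unfolding Zf_def f_def r_def by (simp add: norm_mult norm_power power_mult_distrib power_mult[symmetric] mult.commute)
    have lhs: "(\<Sum>k<Suc (N - 1). cnj (Zf k) * Zf k) = of_real (f\<^sup>2 * S)"
    proof -
      have "(\<Sum>k<Suc (N - 1). cnj (Zf k) * Zf k) = (\<Sum>k<N. of_real ((cmod (Zf k))\<^sup>2))"
        using N1 by (simp add: cnj_mult_self)
      also have "\<dots> = of_real (\<Sum>k<N. f\<^sup>2 * (r\<^sup>2) ^ k)" unfolding normZ by simp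
      also have "\<dots> = of_real (f\<^sup>2 * S)" unfolding S_def by (simp add: sum_distrib_left)
      finally show ?thesis .
    qed
    have P1: "f\<^sup>2 * S \<le> f * r ^ N * (C' * Hz)"
    proof -
      have nn: "0 \<le> f\<^sup>2 * S" using f0 S0 by simp
      have "f\<^sup>2 * S = cmod (of_real (f\<^sup>2 * S) :: complex)" by (simp only: norm_of_real abs_of_nonneg[OF nn])
      also have "\<dots> = cmod (- (a * cnj (Zf (N - 1)) * U (N - 1)))" using tel lhs by (simp only:) simp
      also have "\<dots> = cmod (a * cnj (Zf (N - 1)) * U (N - 1))" by (rule norm_minus_cancel)
      also have "\<dots> = r * (f * r ^ (N - 1)) * cmod (U (N - 1))"
        unfolding Zf_def r_def f_def by (simp add: norm_mult norm_power)
      also have "\<dots> = f * r ^ N * cmod (U (N - 1))"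
      proof -
        have e1: "r * r ^ (N - 1) = r ^ N" using N1 by (cases N) auto
        have "r * (f * r ^ (N - 1)) * cmod (U (N - 1)) = f * (r * r ^ (N - 1)) * cmod (U (N - 1))"
          by (simp only: ac_simps)
        thus ?thesis unfolding e1 .
      qed
      also have "\<dots> \<le> f * r ^ N * (C' * Hz)"
        using Bt hu f0 r0 unfolding U_def by (intro mult_left_mono) (auto intro: order_trans)
      finally show ?thesis .
    qed
    have PB: "f\<^sup>2 * S \<le> d * C'\<^sup>2 * Hz\<^sup>2"
    proof (cases "ev \<phi> t = 0")
      case True
      hence "f = 0" unfolding f_def by simp
      thus ?thesis using d0 by simp
    next
      case False
      hence "r \<le> c" using Pt unfolding r_def a_def by simp
      hence "r\<^sup>2 \<le> 1 + eta" using power_mono[OF \<open>r \<le> c\<close> r0, of 2] cc by simp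
      hence "(r\<^sup>2) ^ N \<le> (eta + 1 / real N) * S"
        unfolding S_def using geo_ineq[OF _ _ eta0 N1] by simp
      moreover have "(r ^ N)\<^sup>2 = (r\<^sup>2) ^ N" by (simp only: power_mult[symmetric] mult.commute)
      ultimately have G: "(r ^ N)\<^sup>2 \<le> d * S" unfolding d_def by simp
      show ?thesis by (rule P_bound[OF f0 S0 _ Hz0 P1 G r0 d0]) (use C'1 in simp)
    qed
    also have "\<dots> \<le> (1 / 2) * Hz\<^sup>2" by (rule mult_right_mono[OF dC]) simp
    also have "\<dots> = Hz\<^sup>2 / 2" by simp
    finally have PB2: "f\<^sup>2 * S \<le> Hz\<^sup>2 / 2" .
    have "(\<Sum>k<m. (cmod (ev (z k) t))\<^sup>2) = (\<Sum>k<m. if k < N then (cmod (Zf k))\<^sup>2 else 0)"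
      using Zt unfolding Zf_def a_def by (intro sum.cong) auto
    also have "\<dots> \<le> (\<Sum>k<N. (cmod (Zf k))\<^sup>2)" by (rule sum_trunc) simp
    also have "\<dots> = f\<^sup>2 * S" unfolding normZ S_def by (simp add: sum_distrib_left)
    finally show "(\<Sum>k<m. (cmod (ev (z k) t))\<^sup>2) \<le> Hz\<^sup>2 / 2" using PB2 by linarith
  qed
  have "Hz\<^sup>2 \<le> Hz\<^sup>2 / 2" unfolding Hz_def by (rule hnorm_le[OF zHA _ key[unfolded Hz_def]]) simp
  hence Hz00: "Hz\<^sup>2 = 0" using zero_le_power2[of Hz] by linarith
  have "eventually (\<lambda>t. ev \<phi> t = 0) F"
  proof (rule ev2[OF hnorm_bound[OF zHA] Ez])
    fix t
    assume H: "summable (\<lambda>k. (cmod (ev (z k) t))\<^sup>2) \<and> (\<Sum>k. (cmod (ev (z k) t))\<^sup>2) \<le> (hnorm A z)\<^sup>2 \<and>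
       (\<forall>m. (\<Sum>k<m. (cmod (ev (z k) t))\<^sup>2) \<le> (hnorm A z)\<^sup>2)"
      and Zt: "\<forall>k. ev (z k) t = (if k < N then ev \<phi> t * cnj (ev \<alpha> t) ^ k else 0)"
    have "(\<Sum>k<1. (cmod (ev (z k) t))\<^sup>2) \<le> (hnorm A z)\<^sup>2" using H by blast
    hence "(\<Sum>k<1. (cmod (ev (z k) t))\<^sup>2) \<le> 0" using Hz00 unfolding Hz_def by simp
    hence "(cmod (ev (z 0) t))\<^sup>2 \<le> 0" by simp
    hence "ev (z 0) t = 0" by simp
    thus "ev \<phi> t = 0" using Zt N1 by simp
  qed
  with phi0 show False by contradiction
qed

end


context falg begin

lemma not_spec:
  assumes K: "K > 1" and E: "eventually (\<lambda>t. K \<le> cmod (ev \<alpha> t)) F"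
    and R: "rep (\<lambda>t. inverse (ev \<alpha> t))"
  shows "\<alpha> \<notin> A_spectrum A (shift A)"
proof -
  obtain \<beta> where b: "eventually (\<lambda>t. ev \<beta> t = inverse (ev \<alpha> t)) F" using R unfolding rep_def by blast
  have AB: "eventually (\<lambda>t. ev \<alpha> t * ev \<beta> t = 1 \<and> cmod (ev \<beta> t) \<le> 1 / K) F"
  proof (rule ev2[OF E b])
    fix t assume k: "K \<le> cmod (ev \<alpha> t)" and bt: "ev \<beta> t = inverse (ev \<alpha> t)"
    have nz: "ev \<alpha> t \<noteq> 0" using k K by auto
    have "cmod (ev \<beta> t) = 1 / cmod (ev \<alpha> t)" unfolding bt by (simp add: norm_inverse divide_inverse)
    also have "\<dots> \<le> 1 / K"
    proof -
      have "0 < cmod (ev \<alpha> t) * K" using k K by (intro mult_pos_pos) auto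
      thus ?thesis using k by (intro divide_left_mono) auto
    qed
    finally show "ev \<alpha> t * ev \<beta> t = 1 \<and> cmod (ev \<beta> t) \<le> 1 / K" using nz bt by simp
  qed
  have "falg_inv A F ev \<alpha> \<beta> (1 / K)"
    by (rule falg_inv.intro[OF falg_axioms], rule falg_inv_axioms.intro) (use K AB in auto)
  thus ?thesis by (rule falg_inv.not_in_spectrum)
qed

end


lemma C01_mem: "continuous_on {0..1} f \<Longrightarrow> (\<And>t. t \<notin> {0..1} \<Longrightarrow> f t = 0) \<Longrightarrow> Rep_C01 (Abs_C01 f) = f"
  by (rule Abs_C01_inverse) auto

lemma C01_cont: "continuous_on {0..1} (Rep_C01 a)"
  using Rep_C01[of a] by auto

lemma C01_out: "t \<notin> {0..1} \<Longrightarrow> Rep_C01 a t = 0"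
  using Rep_C01[of a] by auto

lemma C01_bdd: "\<exists>C. \<forall>t\<in>{0..1}. cmod (Rep_C01 a t) \<le> C"
proof -
  have "compact ((\<lambda>t. cmod (Rep_C01 a t)) ` {0..1::real})"
    by (intro compact_continuous_image continuous_intros C01_cont) simp
  hence "bounded ((\<lambda>t. cmod (Rep_C01 a t)) ` {0..1::real})" by (rule compact_imp_bounded)
  then obtain B where "\<forall>x\<in>(\<lambda>t. cmod (Rep_C01 a t)) ` {0..1::real}. norm x \<le> B" unfolding bounded_iff by blast
  thus ?thesis by auto
qed

lemma falg_C01: "falg C01_alg (principal {0..1}) Rep_C01"
proof (unfold_locales, unfold eventually_principal)
  fix P :: "nat \<Rightarrow> real \<Rightarrow> bool"
  assume "\<And>n. \<forall>x\<in>{0..1}. P n x" thus "\<forall>x\<in>{0..1}. \<forall>n. P n x" by blast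
next
  fix a b assume "\<forall>t\<in>{0..1}. Rep_C01 a t = Rep_C01 b t"
  hence "Rep_C01 a = Rep_C01 b" using C01_out by (intro ext) (metis)
  thus "a = b" by (simp add: Rep_C01_inject)
next
  fix a b show "\<forall>t\<in>{0..1}. Rep_C01 (c_add C01_alg a b) t = Rep_C01 a t + Rep_C01 b t"
    unfolding C01_alg_def by (simp, subst C01_mem) (auto intro!: continuous_intros C01_cont simp: C01_out)
next
  fix a b show "\<forall>t\<in>{0..1}. Rep_C01 (c_mul C01_alg a b) t = Rep_C01 a t * Rep_C01 b t"
    unfolding C01_alg_def by (simp, subst C01_mem) (auto intro!: continuous_intros C01_cont simp: C01_out)
next
  fix a show "\<forall>t\<in>{0..1}. Rep_C01 (c_neg C01_alg a) t = - Rep_C01 a t"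
    unfolding C01_alg_def by (simp, subst C01_mem) (auto intro!: continuous_intros C01_cont simp: C01_out)
next
  fix a show "\<forall>t\<in>{0..1}. Rep_C01 (c_star C01_alg a) t = cnj (Rep_C01 a t)"
    unfolding C01_alg_def by (simp, subst C01_mem) (auto intro!: continuous_intros C01_cont simp: C01_out)
next
  show "\<forall>t\<in>{0..1}. Rep_C01 (c_zero C01_alg) t = 0"
    unfolding C01_alg_def by (simp, subst C01_mem) auto
next
  have "Rep_C01 (Abs_C01 (\<lambda>t. if t \<in> {0..1} then 1 else 0)) = (\<lambda>t. if t \<in> {0..1} then 1 else 0)"
  proof (rule C01_mem)
    show "continuous_on {0..1} (\<lambda>t::real. if t \<in> {0..1} then 1 else 0 :: complex)"
      by (rule continuous_on_cong[THEN iffD1, OF refl _ continuous_on_const[of _ 1]]) auto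
  qed auto
  thus "\<forall>t\<in>{0..1}. Rep_C01 (c_one C01_alg) t = 1" unfolding C01_alg_def by simp
next
  fix a
  let ?g = "\<lambda>t. cmod (Rep_C01 a t)"
  let ?S = "{C. 0 \<le> C \<and> (\<forall>t\<in>{0..1}. cmod (Rep_C01 a t) \<le> C)}"
  obtain B where B: "\<forall>t\<in>{0..1}. ?g t \<le> B" using C01_bdd by blast
  have ne: "?g ` {0..1} \<noteq> {}" by simp
  have bdd: "bdd_above (?g ` {0..1})" using B by (auto intro: bdd_aboveI)
  have Sup0: "0 \<le> Sup (?g ` {0..1})"
    using cSup_upper[OF _ bdd, of "?g 0"] by (simp add: order_trans[OF norm_ge_zero])
  have "Sup (?g ` {0..1}) \<in> ?S" using Sup0 cSup_upper[OF _ bdd] by auto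
  hence le1: "Inf ?S \<le> Sup (?g ` {0..1})" by (intro cInf_lower) (auto intro: bdd_belowI[of _ 0])
  have le2: "Sup (?g ` {0..1}) \<le> Inf ?S"
  proof (rule cInf_greatest)
    show "?S \<noteq> {}" using \<open>Sup (?g ` {0..1}) \<in> ?S\<close> by blast
    fix C assume "C \<in> ?S" thus "Sup (?g ` {0..1}) \<le> C" using ne by (intro cSup_least) auto
  qed
  show "c_norm C01_alg a = Inf ?S" unfolding C01_alg_def using le1 le2 by simp
next
  fix a show "\<exists>C. \<forall>t\<in>{0..1}. cmod (Rep_C01 a t) \<le> C" by (rule C01_bdd)
next
  fix a :: "nat \<Rightarrow> C01" and g :: "real \<Rightarrow> complex"
  assume H: "\<And>e. 0 < e \<Longrightarrow> \<exists>N. \<forall>n\<ge>N. \<forall>t\<in>{0..1}. cmod (Rep_C01 (a n) t - g t) \<le> e"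
  have ul: "uniform_limit {0..1} (\<lambda>n. Rep_C01 (a n)) g sequentially"
  proof (rule uniform_limitI)
    fix e :: real assume "e > 0"
    then obtain N where N: "\<forall>n\<ge>N. \<forall>t\<in>{0..1}. cmod (Rep_C01 (a n) t - g t) \<le> e / 2"
      using H[of "e/2"] by auto
    show "\<forall>\<^sub>F n in sequentially. \<forall>x\<in>{0..1}. dist (Rep_C01 (a n) x) (g x) < e"
      unfolding eventually_sequentially
    proof (intro exI[of _ N] allI impI ballI)
      fix n x assume "N \<le> n" "x \<in> {0..1::real}"
      hence "cmod (Rep_C01 (a n) x - g x) \<le> e / 2" using N by blast
      thus "dist (Rep_C01 (a n) x) (g x) < e" using \<open>e > 0\<close> by (simp add: dist_norm)
    qed
  qed
  have cg: "continuous_on {0..1} g"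
    by (rule uniform_limit_theorem[OF _ ul]) (simp_all add: C01_cont)
  define h where "h t = (if t \<in> {0..1} then g t else 0)" for t
  have ch: "continuous_on {0..1} h" unfolding h_def by (rule continuous_on_cong[THEN iffD1, OF refl _ cg]) auto
  have "Rep_C01 (Abs_C01 h) = h" by (rule C01_mem[OF ch]) (auto simp: h_def)
  thus "\<exists>s. \<forall>t\<in>{0..1}. Rep_C01 s t = g t" by (intro exI[of _ "Abs_C01 h"]) (simp add: h_def)
qed


lemma C01_result:
  "A_spectrum C01_alg (shift C01_alg) = {\<alpha>. inf_abs_C01 \<alpha> \<le> 1}
   \<and> A_point_spectrum C01_alg (shift C01_alg) = {}"
proof -
  interpret I: falg C01_alg "principal {0..1}" Rep_C01 by (rule falg_C01)
  have inf_eq: "\<exists>t0\<in>{0..1}. inf_abs_C01 \<alpha> = cmod (Rep_C01 \<alpha> t0) \<and> (\<forall>t\<in>{0..1}. cmod (Rep_C01 \<alpha> t0) \<le> cmod (Rep_C01 \<alpha> t))"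
    for \<alpha>
  proof -
    have "\<exists>t0\<in>{0..1::real}. \<forall>t\<in>{0..1}. cmod (Rep_C01 \<alpha> t0) \<le> cmod (Rep_C01 \<alpha> t)"
      by (rule continuous_attains_inf) (auto intro!: continuous_intros C01_cont)
    then obtain t0 where t0: "t0 \<in> {0..1}" "\<forall>t\<in>{0..1}. cmod (Rep_C01 \<alpha> t0) \<le> cmod (Rep_C01 \<alpha> t)" by blast
    have "inf_abs_C01 \<alpha> = cmod (Rep_C01 \<alpha> t0)" unfolding inf_abs_C01_def
      by (rule cInf_eq_minimum) (use t0 in auto)
    thus ?thesis using t0 by blast
  qed
  have S: "A_spectrum C01_alg (shift C01_alg) = {\<alpha>. inf_abs_C01 \<alpha> \<le> 1}"
  proof (intro set_eqI iffI; simp only: mem_Collect_eq)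
    fix \<alpha> assume sp: "\<alpha> \<in> A_spectrum C01_alg (shift C01_alg)"
    show "inf_abs_C01 \<alpha> \<le> 1"
    proof (rule ccontr)
      assume "\<not> inf_abs_C01 \<alpha> \<le> 1"
      then obtain t0 where t0: "t0 \<in> {0..1}" "1 < cmod (Rep_C01 \<alpha> t0)"
        "\<forall>t\<in>{0..1}. cmod (Rep_C01 \<alpha> t0) \<le> cmod (Rep_C01 \<alpha> t)" using inf_eq[of \<alpha>] by auto
      have R: "I.rep (\<lambda>t. inverse (Rep_C01 \<alpha> t))" unfolding I.rep_def eventually_principal
      proof (intro exI[of _ "Abs_C01 (\<lambda>t. inverse (Rep_C01 \<alpha> t))"], subst C01_mem)
        show "continuous_on {0..1} (\<lambda>t. inverse (Rep_C01 \<alpha> t))"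
        proof (rule continuous_on_inverse[OF C01_cont], intro ballI)
          fix t :: real assume "t \<in> {0..1}"
          hence "1 < cmod (Rep_C01 \<alpha> t)" using t0 by fastforce
          thus "Rep_C01 \<alpha> t \<noteq> 0" by auto
        qed
      qed (auto simp: C01_out)
      have "\<alpha> \<notin> A_spectrum C01_alg (shift C01_alg)"
        by (rule I.not_spec[OF t0(2) _ R]) (use t0 in \<open>auto simp: eventually_principal\<close>)
      with sp show False by contradiction
    qed
  next
    fix \<alpha> assume le: "inf_abs_C01 \<alpha> \<le> 1"
    obtain t0 where t0: "t0 \<in> {0..1}" "cmod (Rep_C01 \<alpha> t0) \<le> 1" using inf_eq[of \<alpha>] le by auto
    show "\<alpha> \<in> A_spectrum C01_alg (shift C01_alg)"
    proof (rule I.in_spectrum)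
      fix c :: real assume "c > 1"
      have "continuous_on {0..1} (\<lambda>t. cmod (Rep_C01 \<alpha> t))" by (intro continuous_intros C01_cont)
      then obtain d where d: "d > 0" "\<forall>t\<in>{0..1}. dist t t0 < d \<longrightarrow> dist (cmod (Rep_C01 \<alpha> t)) (cmod (Rep_C01 \<alpha> t0)) < c - 1"
        unfolding continuous_on_iff using t0(1) \<open>c > 1\<close> by (metis diff_gt_0_iff_gt)
      define p where "p t = (if t \<in> {0..1} then complex_of_real (max 0 (1 - \<bar>t - t0\<bar> / d)) else 0)" for t
      have cp: "continuous_on {0..1} p" unfolding p_def
        by (rule continuous_on_cong[THEN iffD1, OF refl _ continuous_on_of_real[of _ "\<lambda>t. max 0 (1 - \<bar>t - t0\<bar> / d)"]])
           (use d(1) in \<open>auto intro!: continuous_intros\<close>)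
      have Rp: "Rep_C01 (Abs_C01 p) = p" by (rule C01_mem[OF cp]) (auto simp: p_def)
      show "\<exists>\<phi>. \<not> eventually (\<lambda>t. Rep_C01 \<phi> t = 0) (principal {0..1})
             \<and> eventually (\<lambda>t. Rep_C01 \<phi> t \<noteq> 0 \<longrightarrow> cmod (Rep_C01 \<alpha> t) \<le> c) (principal {0..1})"
      proof (intro exI[of _ "Abs_C01 p"] conjI, unfold eventually_principal Rp)
        show "\<not> (\<forall>t\<in>{0..1}. p t = 0)" using t0(1) d(1) by (auto simp: p_def intro!: bexI[of _ t0])
        show "\<forall>t\<in>{0..1}. p t \<noteq> 0 \<longrightarrow> cmod (Rep_C01 \<alpha> t) \<le> c"
        proof (intro ballI impI)
          fix t :: real assume t: "t \<in> {0..1}" and "p t \<noteq> 0"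
          define y where "y = \<bar>t - t0\<bar> / d"
          have pe: "p t = complex_of_real (max 0 (1 - y))" using t unfolding p_def y_def by simp
          have "max 0 (1 - y) \<noteq> 0" using \<open>p t \<noteq> 0\<close> unfolding pe by (metis of_real_0)
          hence "y < 1" by (auto simp: max_def split: if_splits)
          hence "\<bar>t - t0\<bar> / d < 1" unfolding y_def .
          hence "dist t t0 < d" using d(1) by (simp add: dist_real_def field_simps)
          hence "dist (cmod (Rep_C01 \<alpha> t)) (cmod (Rep_C01 \<alpha> t0)) < c - 1" using d(2) t by blast
          thus "cmod (Rep_C01 \<alpha> t) \<le> c" using t0(2) by (simp add: dist_real_def)
        qed
      qed
    qed
  qed
  show ?thesis using S I.point_spectrum_empty by blast
qed


abbreviation "S01 \<equiv> {0<..<1::real}"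
abbreviation "FL \<equiv> inf (ae_filter lborel) (principal S01)"

lemma evL: "eventually P FL \<longleftrightarrow> (AE t in lborel. t \<in> S01 \<longrightarrow> P t)"
  by (rule eventually_inf_principal)

lemma Linf_set_rel: "f \<in> Linf_set \<Longrightarrow> Linf_rel f f"
  unfolding Linf_rel_def by simp

lemma rep_in: "rep_Linf a \<in> Linf_set"
  using Quotient3_rep_reflp[OF Quotient3_Linf, of a] unfolding Linf_rel_def by simp

lemma rep_abs_ae: "f \<in> Linf_set \<Longrightarrow> AE t in lborel. t \<in> S01 \<longrightarrow> rep_Linf (abs_Linf f) t = f t"
  using Quotient3_rep_abs[OF Quotient3_Linf Linf_set_rel] unfolding Linf_rel_def by blast

lemma Linf_eq: "(AE t in lborel. t \<in> S01 \<longrightarrow> rep_Linf a t = rep_Linf b t) \<Longrightarrow> a = b"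
  using Quotient3_rel_rep[OF Quotient3_Linf, of a b] rep_in unfolding Linf_rel_def by blast

lemma Linf_setI:
  assumes "(\<lambda>t. indicator S01 t *\<^sub>R f t) \<in> borel_measurable lborel"
    and "AE t in lborel. t \<in> S01 \<longrightarrow> cmod (f t) \<le> C"
  shows "f \<in> Linf_set"
  unfolding Linf_set_def set_borel_measurable_def using assms by blast

lemma Linf_setD:
  assumes "f \<in> Linf_set"
  obtains C where "(\<lambda>t. indicator S01 t *\<^sub>R f t) \<in> borel_measurable lborel"
    and "0 \<le> C" and "AE t in lborel. t \<in> S01 \<longrightarrow> cmod (f t) \<le> C"
proof -
  from assms obtain C where m: "(\<lambda>t. indicator S01 t *\<^sub>R f t) \<in> borel_measurable lborel"
    and C: "AE t in lborel. t \<in> S01 \<longrightarrow> cmod (f t) \<le> C"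
    unfolding Linf_set_def set_borel_measurable_def by blast
  have "AE t in lborel. t \<in> S01 \<longrightarrow> cmod (f t) \<le> max C 0" using C by eventually_elim auto
  with m show ?thesis using that[of "max C 0"] by simp
qed

lemma Linf_add: "f \<in> Linf_set \<Longrightarrow> g \<in> Linf_set \<Longrightarrow> (\<lambda>t. f t + g t) \<in> Linf_set"
proof -
  assume f: "f \<in> Linf_set" and g: "g \<in> Linf_set"
  obtain C1 where m1: "(\<lambda>t. indicator S01 t *\<^sub>R f t) \<in> borel_measurable lborel" and C1: "AE t in lborel. t \<in> S01 \<longrightarrow> cmod (f t) \<le> C1"
    using Linf_setD[OF f] by blast
  obtain C2 where m2: "(\<lambda>t. indicator S01 t *\<^sub>R g t) \<in> borel_measurable lborel" and C2: "AE t in lborel. t \<in> S01 \<longrightarrow> cmod (g t) \<le> C2"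
    using Linf_setD[OF g] by blast
  have e: "(\<lambda>t. indicator S01 t *\<^sub>R (f t + g t)) = (\<lambda>t. indicator S01 t *\<^sub>R f t + indicator S01 t *\<^sub>R g t)"
    by (simp add: scaleR_add_right)
  show ?thesis
  proof (rule Linf_setI)
    show "(\<lambda>t. indicator S01 t *\<^sub>R (f t + g t)) \<in> borel_measurable lborel" unfolding e using m1 m2 by measurable
    show "AE t in lborel. t \<in> S01 \<longrightarrow> cmod (f t + g t) \<le> C1 + C2"
      using C1 C2 by eventually_elim (auto intro: order_trans[OF norm_triangle_ineq] add_mono)
  qed
qed

lemma Linf_mul: "f \<in> Linf_set \<Longrightarrow> g \<in> Linf_set \<Longrightarrow> (\<lambda>t. f t * g t) \<in> Linf_set"
proof -
  assume f: "f \<in> Linf_set" and g: "g \<in> Linf_set"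
  obtain C1 where m1: "(\<lambda>t. indicator S01 t *\<^sub>R f t) \<in> borel_measurable lborel" and "0 \<le> C1" and C1: "AE t in lborel. t \<in> S01 \<longrightarrow> cmod (f t) \<le> C1"
    using Linf_setD[OF f] by blast
  obtain C2 where m2: "(\<lambda>t. indicator S01 t *\<^sub>R g t) \<in> borel_measurable lborel" and "0 \<le> C2" and C2: "AE t in lborel. t \<in> S01 \<longrightarrow> cmod (g t) \<le> C2"
    using Linf_setD[OF g] by blast
  have e: "(\<lambda>t. indicator S01 t *\<^sub>R (f t * g t)) = (\<lambda>t. (indicator S01 t *\<^sub>R f t) * (indicator S01 t *\<^sub>R g t))"
    by (auto simp: indicator_def)
  show ?thesis
  proof (rule Linf_setI)
    show "(\<lambda>t. indicator S01 t *\<^sub>R (f t * g t)) \<in> borel_measurable lborel" unfolding e using m1 m2 by measurable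
    show "AE t in lborel. t \<in> S01 \<longrightarrow> cmod (f t * g t) \<le> C1 * C2"
      using C1 C2 by eventually_elim (auto simp: norm_mult intro!: mult_mono \<open>0 \<le> C2\<close> \<open>0 \<le> C1\<close>)
  qed
qed

lemma Linf_neg: "f \<in> Linf_set \<Longrightarrow> (\<lambda>t. - f t) \<in> Linf_set"
proof -
  assume f: "f \<in> Linf_set"
  obtain C1 where m1: "(\<lambda>t. indicator S01 t *\<^sub>R f t) \<in> borel_measurable lborel" and C1: "AE t in lborel. t \<in> S01 \<longrightarrow> cmod (f t) \<le> C1"
    using Linf_setD[OF f] by blast
  have e: "(\<lambda>t. indicator S01 t *\<^sub>R (- f t)) = (\<lambda>t. - (indicator S01 t *\<^sub>R f t))" by simp
  show ?thesis
  proof (rule Linf_setI)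
    show "(\<lambda>t. indicator S01 t *\<^sub>R (- f t)) \<in> borel_measurable lborel" unfolding e using m1 by measurable
    show "AE t in lborel. t \<in> S01 \<longrightarrow> cmod (- f t) \<le> C1" using C1 by simp
  qed
qed

lemma Linf_cnj: "f \<in> Linf_set \<Longrightarrow> (\<lambda>t. cnj (f t)) \<in> Linf_set"
proof -
  assume f: "f \<in> Linf_set"
  obtain C1 where m1: "(\<lambda>t. indicator S01 t *\<^sub>R f t) \<in> borel_measurable lborel" and C1: "AE t in lborel. t \<in> S01 \<longrightarrow> cmod (f t) \<le> C1"
    using Linf_setD[OF f] by blast
  have e: "(\<lambda>t. indicator S01 t *\<^sub>R cnj (f t)) = (\<lambda>t. cnj (indicator S01 t *\<^sub>R f t))" by (simp add: indicator_def)
  show ?thesis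
  proof (rule Linf_setI)
    show "(\<lambda>t. indicator S01 t *\<^sub>R cnj (f t)) \<in> borel_measurable lborel" unfolding e
      by (rule borel_measurable_continuous_on[OF _ m1]) (intro continuous_intros)
    show "AE t in lborel. t \<in> S01 \<longrightarrow> cmod (cnj (f t)) \<le> C1" using C1 by simp
  qed
qed

lemma Linf_const: "(\<lambda>t. c) \<in> Linf_set"
proof (rule Linf_setI)
  show "(\<lambda>t. indicator S01 t *\<^sub>R c) \<in> borel_measurable lborel" by measurable
  show "AE t in lborel. t \<in> S01 \<longrightarrow> cmod c \<le> cmod c" by simp
qed


lemma rep_abs_ev: "f \<in> Linf_set \<Longrightarrow> eventually (\<lambda>t. rep_Linf (abs_Linf f) t = f t) FL"
  unfolding evL by (rule rep_abs_ae)

lemma falg_Linf: "falg Linf_alg FL rep_Linf"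
proof (unfold_locales)
  fix P :: "nat \<Rightarrow> real \<Rightarrow> bool"
  assume "\<And>n. eventually (P n) FL"
  hence A: "\<forall>n. AE t in lborel. t \<in> S01 \<longrightarrow> P n t" unfolding evL by blast
  have "AE t in lborel. \<forall>n. t \<in> S01 \<longrightarrow> P n t" unfolding AE_all_countable by (rule A)
  thus "eventually (\<lambda>t. \<forall>n. P n t) FL" unfolding evL by eventually_elim auto
next
  fix a b assume "eventually (\<lambda>t. rep_Linf a t = rep_Linf b t) FL"
  thus "a = b" unfolding evL by (rule Linf_eq)
next
  fix a b show "eventually (\<lambda>t. rep_Linf (c_add Linf_alg a b) t = rep_Linf a t + rep_Linf b t) FL"
    unfolding Linf_alg_def by (simp, intro rep_abs_ev Linf_add rep_in)
next
  fix a b show "eventually (\<lambda>t. rep_Linf (c_mul Linf_alg a b) t = rep_Linf a t * rep_Linf b t) FL"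
    unfolding Linf_alg_def by (simp, intro rep_abs_ev Linf_mul rep_in)
next
  fix a show "eventually (\<lambda>t. rep_Linf (c_neg Linf_alg a) t = - rep_Linf a t) FL"
    unfolding Linf_alg_def by (simp, intro rep_abs_ev Linf_neg rep_in)
next
  fix a show "eventually (\<lambda>t. rep_Linf (c_star Linf_alg a) t = cnj (rep_Linf a t)) FL"
    unfolding Linf_alg_def by (simp, intro rep_abs_ev Linf_cnj rep_in)
next
  show "eventually (\<lambda>t. rep_Linf (c_zero Linf_alg) t = 0) FL"
    unfolding Linf_alg_def by (simp, intro rep_abs_ev Linf_const)
next
  show "eventually (\<lambda>t. rep_Linf (c_one Linf_alg) t = 1) FL"
    unfolding Linf_alg_def by (simp, intro rep_abs_ev Linf_const)
next
  fix a show "c_norm Linf_alg a = Inf {C. 0 \<le> C \<and> eventually (\<lambda>t. cmod (rep_Linf a t) \<le> C) FL}"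
    unfolding Linf_alg_def evL by simp
next
  fix a show "\<exists>C. eventually (\<lambda>t. cmod (rep_Linf a t) \<le> C) FL"
    unfolding evL using Linf_setD[OF rep_in[of a]] by metis
next
  fix a :: "nat \<Rightarrow> Linf" and g :: "real \<Rightarrow> complex"
  assume H: "\<And>e. 0 < e \<Longrightarrow> \<exists>N. \<forall>n\<ge>N. eventually (\<lambda>t. cmod (rep_Linf (a n) t - g t) \<le> e) FL"
  have "\<forall>m. \<exists>N. \<forall>n\<ge>N. AE t in lborel. t \<in> S01 \<longrightarrow> cmod (rep_Linf (a n) t - g t) \<le> 1 / real (Suc m)"
    using H unfolding evL by simp
  then obtain Nf where Nf: "\<And>m n. n \<ge> Nf m \<Longrightarrow> AE t in lborel. t \<in> S01 \<longrightarrow> cmod (rep_Linf (a n) t - g t) \<le> 1 / real (Suc m)"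
    by metis
  have AEall: "AE t in lborel. t \<in> S01 \<longrightarrow> (\<forall>m n. n \<ge> Nf m \<longrightarrow> cmod (rep_Linf (a n) t - g t) \<le> 1 / real (Suc m))"
  proof -
    have "\<And>m n. AE t in lborel. n \<ge> Nf m \<longrightarrow> t \<in> S01 \<longrightarrow> cmod (rep_Linf (a n) t - g t) \<le> 1 / real (Suc m)"
    proof -
      fix m n show "AE t in lborel. n \<ge> Nf m \<longrightarrow> t \<in> S01 \<longrightarrow> cmod (rep_Linf (a n) t - g t) \<le> 1 / real (Suc m)"
        by (cases "n \<ge> Nf m") (use Nf in auto)
    qed
    hence "AE t in lborel. \<forall>m n. n \<ge> Nf m \<longrightarrow> t \<in> S01 \<longrightarrow> cmod (rep_Linf (a n) t - g t) \<le> 1 / real (Suc m)"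
      by (simp add: AE_all_countable)
    thus ?thesis by eventually_elim blast
  qed
  define fn where "fn n t = indicator S01 t *\<^sub>R rep_Linf (a n) t" for n t
  have mfn: "fn n \<in> borel_measurable lborel" for n
    using Linf_setD[OF rep_in[of "a n"]] unfolding fn_def by metis
  define h where "h t = lim (\<lambda>n. fn n t)" for t
  have mh: "h \<in> borel_measurable lborel" unfolding h_def using mfn by measurable
  have h_out: "h t = 0" if "t \<notin> S01" for t unfolding h_def fn_def using that by (simp add: limI[of "\<lambda>n. 0" 0])
  have h_conv: "h t = g t" if "t \<in> S01" and Ht: "\<forall>m n. n \<ge> Nf m \<longrightarrow> cmod (rep_Linf (a n) t - g t) \<le> 1 / real (Suc m)" for t
  proof -
    have "(\<lambda>n. rep_Linf (a n) t) \<longlonglongrightarrow> g t"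
    proof (rule LIMSEQ_I)
      fix r :: real assume "r > 0"
      then obtain m where m: "1 / real (Suc m) < r" using nat_approx_posE by blast
      show "\<exists>N. \<forall>n\<ge>N. norm (rep_Linf (a n) t - g t) < r"
        using Ht m by (intro exI[of _ "Nf m"]) (auto intro: le_less_trans)
    qed
    moreover have "(\<lambda>n. fn n t) = (\<lambda>n. rep_Linf (a n) t)" unfolding fn_def using that by simp
    ultimately show ?thesis unfolding h_def by (simp add: limI)
  qed
  obtain C where C: "AE t in lborel. t \<in> S01 \<longrightarrow> cmod (rep_Linf (a (Nf 0)) t) \<le> C"
    using Linf_setD[OF rep_in[of "a (Nf 0)"]] by metis
  have hL: "h \<in> Linf_set"
  proof (rule Linf_setI)
    have "(\<lambda>t. indicator S01 t *\<^sub>R h t) = h" using h_out by (auto simp: indicator_def)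
    thus "(\<lambda>t. indicator S01 t *\<^sub>R h t) \<in> borel_measurable lborel" using mh by simp
    show "AE t in lborel. t \<in> S01 \<longrightarrow> cmod (h t) \<le> C + 1"
      using AEall C
    proof eventually_elim
      case (elim t)
      show ?case
      proof
        assume t: "t \<in> S01"
        hence "h t = g t" using h_conv elim by blast
        moreover have "cmod (rep_Linf (a (Nf 0)) t - g t) \<le> 1 / real (Suc 0)"
          using elim(1) t by blast
        hence "cmod (rep_Linf (a (Nf 0)) t - g t) \<le> 1" by simp
        moreover have "cmod (rep_Linf (a (Nf 0)) t) \<le> C" using elim t by blast
        ultimately show "cmod (h t) \<le> C + 1" using norm_triangle_ineq3[of "g t" "rep_Linf (a (Nf 0)) t"]
          by (simp add: norm_minus_commute)
      qed
    qed
  qed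
  have "AE t in lborel. t \<in> S01 \<longrightarrow> rep_Linf (abs_Linf h) t = g t"
    using rep_abs_ae[OF hL] AEall by eventually_elim (use h_conv in auto)
  thus "\<exists>s. eventually (\<lambda>t. rep_Linf s t = g t) FL" unfolding evL by blast
qed


definition EL :: "Linf \<Rightarrow> real \<Rightarrow> real set" where
  "EL \<alpha> C = {t \<in> S01. cmod (rep_Linf \<alpha> t) \<le> C}"

lemma EL_sets: "EL \<alpha> C \<in> sets lborel"
proof -
  obtain B where m: "(\<lambda>t. indicator S01 t *\<^sub>R rep_Linf \<alpha> t) \<in> borel_measurable lborel"
    using Linf_setD[OF rep_in[of \<alpha>]] by metis
  have "EL \<alpha> C = {t \<in> space lborel. t \<in> S01 \<and> cmod (indicator S01 t *\<^sub>R rep_Linf \<alpha> t) \<le> C}"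
    unfolding EL_def by auto
  also have "\<dots> \<in> sets lborel" using m by measurable
  finally show ?thesis .
qed

lemma EL_sub: "EL \<alpha> C \<subseteq> S01" unfolding EL_def by auto

lemma EL_mono: "C \<le> D \<Longrightarrow> EL \<alpha> C \<subseteq> EL \<alpha> D" unfolding EL_def by auto

lemma essinf_set: "essinf_abs_Linf \<alpha> = Inf {C. 0 < C \<and> emeasure lborel (EL \<alpha> C) > 0}"
  unfolding essinf_abs_Linf_def EL_def ..

lemma essinf_set_ne: "{C. 0 < C \<and> emeasure lborel (EL \<alpha> C) > 0} \<noteq> {}"
proof -
  obtain B where B0: "0 \<le> B" and B: "AE t in lborel. t \<in> S01 \<longrightarrow> cmod (rep_Linf \<alpha> t) \<le> B"
    using Linf_setD[OF rep_in[of \<alpha>]] by metis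
  have "emeasure lborel (EL \<alpha> (B + 1)) = emeasure lborel S01"
  proof (rule emeasure_eq_AE[OF _ EL_sets])
    show "AE x in lborel. (x \<in> EL \<alpha> (B + 1)) = (x \<in> S01)" using B by eventually_elim (auto simp: EL_def)
  qed simp
  also have "\<dots> = 1" by simp
  finally have "B + 1 \<in> {C. 0 < C \<and> emeasure lborel (EL \<alpha> C) > 0}" using B0 by simp
  thus ?thesis by blast
qed

lemma Linf_inverse:
  assumes K: "K > 0" and E: "AE t in lborel. t \<in> S01 \<longrightarrow> K \<le> cmod (rep_Linf \<alpha> t)"
  shows "(\<lambda>t. inverse (rep_Linf \<alpha> t)) \<in> Linf_set"
proof (rule Linf_setI)
  obtain B where m: "(\<lambda>t. indicator S01 t *\<^sub>R rep_Linf \<alpha> t) \<in> borel_measurable lborel"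
    using Linf_setD[OF rep_in[of \<alpha>]] by metis
  have e: "(\<lambda>t. indicator S01 t *\<^sub>R inverse (rep_Linf \<alpha> t)) = (\<lambda>t. inverse (indicator S01 t *\<^sub>R rep_Linf \<alpha> t))"
    by (auto simp: indicator_def)
  show "(\<lambda>t. indicator S01 t *\<^sub>R inverse (rep_Linf \<alpha> t)) \<in> borel_measurable lborel" unfolding e using m by measurable
  show "AE t in lborel. t \<in> S01 \<longrightarrow> cmod (inverse (rep_Linf \<alpha> t)) \<le> 1 / K"
    using E
  proof eventually_elim
    case (elim t)
    show ?case
    proof
      assume "t \<in> S01"
      hence k: "K \<le> cmod (rep_Linf \<alpha> t)" using elim by blast
      have "cmod (inverse (rep_Linf \<alpha> t)) = 1 / cmod (rep_Linf \<alpha> t)" by (simp add: norm_inverse divide_inverse)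
      also have "\<dots> \<le> 1 / K"
      proof -
        have "0 < cmod (rep_Linf \<alpha> t) * K" using k K by (intro mult_pos_pos) auto
        thus ?thesis using k by (intro divide_left_mono) auto
      qed
      finally show "cmod (inverse (rep_Linf \<alpha> t)) \<le> 1 / K" .
    qed
  qed
qed

lemma Linf_result:
  "A_spectrum Linf_alg (shift Linf_alg) = {\<alpha>. essinf_abs_Linf \<alpha> \<le> 1}
   \<and> A_point_spectrum Linf_alg (shift Linf_alg) = {}"
proof -
  interpret I: falg Linf_alg FL rep_Linf by (rule falg_Linf)
  have S: "A_spectrum Linf_alg (shift Linf_alg) = {\<alpha>. essinf_abs_Linf \<alpha> \<le> 1}"
  proof (intro set_eqI iffI; simp only: mem_Collect_eq)
    fix \<alpha> assume sp: "\<alpha> \<in> A_spectrum Linf_alg (shift Linf_alg)"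
    show "essinf_abs_Linf \<alpha> \<le> 1"
    proof (rule ccontr)
      assume "\<not> essinf_abs_Linf \<alpha> \<le> 1"
      define K where "K = (1 + essinf_abs_Linf \<alpha>) / 2"
      have K1: "1 < K" and Ke: "K < essinf_abs_Linf \<alpha>" unfolding K_def using \<open>\<not> essinf_abs_Linf \<alpha> \<le> 1\<close> by auto
      have AEK: "AE t in lborel. t \<in> S01 \<longrightarrow> K \<le> cmod (rep_Linf \<alpha> t)"
      proof (rule ccontr)
        assume nAE: "\<not> (AE t in lborel. t \<in> S01 \<longrightarrow> K \<le> cmod (rep_Linf \<alpha> t))"
        define N where "N = {t \<in> S01. cmod (rep_Linf \<alpha> t) < K}"
        have NE: "N \<subseteq> EL \<alpha> K" unfolding N_def EL_def by auto
        have Ns: "N \<in> sets lborel"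
        proof -
          obtain B where m: "(\<lambda>t. indicator S01 t *\<^sub>R rep_Linf \<alpha> t) \<in> borel_measurable lborel"
            using Linf_setD[OF rep_in[of \<alpha>]] by metis
          have "N = {t \<in> space lborel. t \<in> S01 \<and> cmod (indicator S01 t *\<^sub>R rep_Linf \<alpha> t) < K}"
            unfolding N_def by auto
          also have "\<dots> \<in> sets lborel" using m by measurable
          finally show ?thesis .
        qed
        have Neq: "{x \<in> space lborel. \<not> (x \<in> S01 \<longrightarrow> K \<le> cmod (rep_Linf \<alpha> x))} = N"
          unfolding N_def by auto
        have "emeasure lborel N \<noteq> 0"
          using nAE AE_iff_measurable[OF Ns Neq] by blast
        hence "0 < emeasure lborel N" by (simp add: zero_less_iff_neq_zero)
        also have "\<dots> \<le> emeasure lborel (EL \<alpha> K)" by (rule emeasure_mono[OF NE EL_sets])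
        finally have "K \<in> {C. 0 < C \<and> emeasure lborel (EL \<alpha> C) > 0}" using K1 by simp
        hence "essinf_abs_Linf \<alpha> \<le> K" unfolding essinf_set by (intro cInf_lower) (auto intro: bdd_belowI[of _ 0])
        with Ke show False by simp
      qed
      have R: "I.rep (\<lambda>t. inverse (rep_Linf \<alpha> t))" unfolding I.rep_def
        using rep_abs_ev[OF Linf_inverse[OF _ AEK]] K1 by auto
      have "\<alpha> \<notin> A_spectrum Linf_alg (shift Linf_alg)"
        by (rule I.not_spec[OF K1 _ R]) (use AEK in \<open>simp add: evL\<close>)
      with sp show False by contradiction
    qed
  next
    fix \<alpha> assume le: "essinf_abs_Linf \<alpha> \<le> 1"
    show "\<alpha> \<in> A_spectrum Linf_alg (shift Linf_alg)"
    proof (rule I.in_spectrum)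
      fix c :: real assume "c > 1"
      let ?S = "{C. 0 < C \<and> emeasure lborel (EL \<alpha> C) > 0}"
      have "Inf ?S < c" using le \<open>c > 1\<close> unfolding essinf_set by simp
      moreover have "bdd_below ?S" by (rule bdd_belowI[of _ 0]) auto
      ultimately obtain C where C: "C \<in> ?S" "C < c"
        using cInf_less_iff[of ?S c] essinf_set_ne[of \<alpha>] by blast
      have pos: "0 < emeasure lborel (EL \<alpha> c)"
        using C emeasure_mono[OF EL_mono[of C c \<alpha>] EL_sets] by (auto intro: less_le_trans)
      define p where "p t = (if t \<in> EL \<alpha> c then 1 else 0 :: complex)" for t
      have pL: "p \<in> Linf_set"
      proof (rule Linf_setI)
        have "(\<lambda>t. indicator S01 t *\<^sub>R p t) = (\<lambda>t. indicator (EL \<alpha> c) t *\<^sub>R (1::complex))"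
        proof
          fix t show "indicator S01 t *\<^sub>R p t = indicator (EL \<alpha> c) t *\<^sub>R (1::complex)"
            using EL_sub[of \<alpha> c] by (cases "t \<in> EL \<alpha> c") (auto simp: p_def indicator_def)
        qed
        thus "(\<lambda>t. indicator S01 t *\<^sub>R p t) \<in> borel_measurable lborel" using EL_sets[of \<alpha> c] by simp
        show "AE t in lborel. t \<in> S01 \<longrightarrow> cmod (p t) \<le> 1" by (simp add: p_def)
      qed
      have Rp: "AE t in lborel. t \<in> S01 \<longrightarrow> rep_Linf (abs_Linf p) t = p t" by (rule rep_abs_ae[OF pL])
      show "\<exists>\<phi>. \<not> eventually (\<lambda>t. rep_Linf \<phi> t = 0) FL
             \<and> eventually (\<lambda>t. rep_Linf \<phi> t \<noteq> 0 \<longrightarrow> cmod (rep_Linf \<alpha> t) \<le> c) FL"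
      proof (intro exI[of _ "abs_Linf p"] conjI notI, unfold evL)
        assume Z: "AE t in lborel. t \<in> S01 \<longrightarrow> rep_Linf (abs_Linf p) t = 0"
        have "AE t in lborel. t \<notin> EL \<alpha> c" using Z Rp
        proof eventually_elim
          case (elim t) thus ?case by (auto simp: p_def EL_def)
        qed
        hence "emeasure lborel (EL \<alpha> c) = 0"
        proof -
          have "{x \<in> space lborel. \<not> (x \<notin> EL \<alpha> c)} = EL \<alpha> c" by auto
          from AE_iff_measurable[OF EL_sets this] \<open>AE t in lborel. t \<notin> EL \<alpha> c\<close> show ?thesis by blast
        qed
        with pos show False by simp
      next
        show "AE t in lborel. t \<in> S01 \<longrightarrow> rep_Linf (abs_Linf p) t \<noteq> 0 \<longrightarrow> cmod (rep_Linf \<alpha> t) \<le> c"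
          using Rp
        proof eventually_elim
          case (elim t) thus ?case by (auto simp: p_def EL_def split: if_splits)
        qed
      qed
    qed
  qed
  show ?thesis using S I.point_spectrum_empty by blast
qed


theorem proposition2p1:
  shows "A_spectrum C01_alg (shift C01_alg) = {\<alpha>. inf_abs_C01 \<alpha> \<le> 1}
       \<and> A_point_spectrum C01_alg (shift C01_alg) = {}
       \<and> A_spectrum Linf_alg (shift Linf_alg) = {\<alpha>. essinf_abs_Linf \<alpha> \<le> 1}
       \<and> A_point_spectrum Linf_alg (shift Linf_alg) = {}"
  using C01_result Linf_result by blast

end
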